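(* Let $\gamma=(\gamma_1,\dots,\gamma_b)$ be a parallel map on $V=V_1\oplus\cdots\oplus V_b$, $V_i\cong(\mathbb F_2)^m$ with $m\ge4$, and $0\gamma=0$. Suppose every $\gamma_i$ is differentially $4$-uniform and satisfies $\hat n(\gamma_i)=0$. If $\gamma$ maps $\mathcal{LA}_U(W_1|W_2)$ onto a non-trivial partition $\mathcal{LA}_{U'}(W_1'|W_2')$, where $J_U\cap J_{U'}=\emptyset$, then $W_1,W_2,W_1',W_2'$ are walls and $W_1=W_1'=W_2=W_2'$; in particular both partitions are linear.
   Context: Let $b>1$, $n=mb$, $V=(\mathbb F_2)^n=V_1\oplus\cdots\oplus V_b$, $V_i\cong(\mathbb F_2)^m$. Permutations act on the right. A parallel map is $\gamma\in\mathrm{Sym}(V)$ with $(v_1\oplus\cdots\oplus v_b)\gamma=v_1\gamma_1\oplus\cdots\oplus v_b\gamma_b$, $\gamma_i\in\mathrm{Sym}(V_i)$. A wall is $\bigoplus_{i\in I}V_i$ with $\emptyset\ne I\subsetneq\{1,\dots,b\}$. For a subspace $U$ of dimension $n-1$, $J_U=\{j:V_j\cap U\subsetneq V_j\}$. For $f:(\mathbb F_2)^m\to(\mathbb F_2)^m$, $\hat f_a(x)=f(x+a)+f(x)$; $f$ is differentially $\delta$-uniform if $\delta=\max_{a\ne0,b}|\{x:\hat f_a(x)=b\}|$; $\hat n(f)=\max_{a\ne0}|\{v\ne0: x\mapsto\langle\hat f_a(x),v\rangle\text{ is constant}\}|$ with $\langle\cdot,\cdot\rangle$ the standard dot product. A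 permutation maps $\mathcal A$ onto $\mathcal B$ if it sends the blocks of $\mathcal A$ exactly onto those of $\mathcal B$; trivial partitions are the singleton partition and $\{V\}$. $\mathcal L(W)=\{W+v:v\in V\}$ (linear partition). For subspaces $W_1,W_2\subseteq U$, $\mathcal{LA}_U(W_1|W_2)=\{W_1+v:v\in U\}\cup\{(W_2+\bar v)+v:v\in U\}$ for any $\bar v\in V\setminus U$. *)

theory Defs
  imports Main
begin

text \<open>Vectors of (F_2)^k are modelled as functions nat => bool vanishing outside {..<k};
  True = 1, False = 0. Addition over F_2 is pointwise exclusive or.\<close>

definition vec :: "nat \<Rightarrow> (nat \<Rightarrow> bool) set" where
  "vec k = {v. \<forall>j\<ge>k. \<not> v j}"

definition zero :: "nat \<Rightarrow> bool" where
  "zero = (\<lambda>_. False)"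

definition vadd :: "(nat \<Rightarrow> bool) \<Rightarrow> (nat \<Rightarrow> bool) \<Rightarrow> (nat \<Rightarrow> bool)" where
  "vadd u v = (\<lambda>j. u j \<noteq> v j)"

definition ip :: "nat \<Rightarrow> (nat \<Rightarrow> bool) \<Rightarrow> (nat \<Rightarrow> bool) \<Rightarrow> bool" where
  "ip k u v = odd (card {j. j < k \<and> u j \<and> v j})"

definition subspace :: "nat \<Rightarrow> (nat \<Rightarrow> bool) set \<Rightarrow> bool" where
  "subspace k S \<longleftrightarrow> S \<subseteq> vec k \<and> zero \<in> S \<and> (\<forall>u\<in>S. \<forall>v\<in>S. vadd u v \<in> S)"

definition coset :: "(nat \<Rightarrow> bool) set \<Rightarrow> (nat \<Rightarrow> bool) \<Rightarrow> (nat \<Rightarrow> bool) set" where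
  "coset W v = (\<lambda>w. vadd w v) ` W"

text \<open>Block decomposition V = V_0 + ... + V_(b-1), block i occupying coordinates
  i*m .. i*m+m-1 of V = (F_2)^(m*b). Blocks are indexed from 0.\<close>
definition blk :: "nat \<Rightarrow> nat \<Rightarrow> (nat \<Rightarrow> bool) \<Rightarrow> (nat \<Rightarrow> bool)" where
  "blk m i v = (\<lambda>j. if j < m then v (i * m + j) else False)"

definition block :: "nat \<Rightarrow> nat \<Rightarrow> nat \<Rightarrow> (nat \<Rightarrow> bool) set" where
  "block m b i = {v \<in> vec (m * b). \<forall>k. v k \<longrightarrow> k div m = i}"

definition par :: "nat \<Rightarrow> nat \<Rightarrow> (nat \<Rightarrow> (nat \<Rightarrow> bool) \<Rightarrow> (nat \<Rightarrow> bool)) \<Rightarrow> (nat \<Rightarrow> bool) \<Rightarrow> (nat \<Rightarrow> bool)" where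
  "par m b g v = (\<lambda>k. if k < m * b then g (k div m) (blk m (k div m) v) (k mod m) else False)"

definition wall :: "nat \<Rightarrow> nat \<Rightarrow> (nat \<Rightarrow> bool) set \<Rightarrow> bool" where
  "wall m b W \<longleftrightarrow> (\<exists>I. I \<noteq> {} \<and> I \<subset> {..<b} \<and>
      W = {v \<in> vec (m * b). \<forall>k. v k \<longrightarrow> k div m \<in> I})"

definition J :: "nat \<Rightarrow> nat \<Rightarrow> (nat \<Rightarrow> bool) set \<Rightarrow> nat set" where
  "J m b U = {j. j < b \<and> block m b j \<inter> U \<subset> block m b j}"

definition fder :: "((nat \<Rightarrow> bool) \<Rightarrow> (nat \<Rightarrow> bool)) \<Rightarrow> (nat \<Rightarrow> bool) \<Rightarrow> (nat \<Rightarrow> bool) \<Rightarrow> (nat \<Rightarrow> bool)" where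
  "fder f a x = vadd (f (vadd x a)) (f x)"

definition diff_unif :: "nat \<Rightarrow> ((nat \<Rightarrow> bool) \<Rightarrow> (nat \<Rightarrow> bool)) \<Rightarrow> nat" where
  "diff_unif m f = Max {card {x \<in> vec m. fder f a x = c} | a c.
      a \<in> vec m \<and> a \<noteq> zero \<and> c \<in> vec m}"

definition nhat :: "nat \<Rightarrow> ((nat \<Rightarrow> bool) \<Rightarrow> (nat \<Rightarrow> bool)) \<Rightarrow> nat" where
  "nhat m f = Max {card {v \<in> vec m. v \<noteq> zero \<and>
        (\<exists>c. \<forall>x\<in>vec m. ip m (fder f a x) v = c)} | a. a \<in> vec m \<and> a \<noteq> zero}"

definition lin_part :: "nat \<Rightarrow> (nat \<Rightarrow> bool) set \<Rightarrow> (nat \<Rightarrow> bool) set set" where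
  "lin_part n W = {coset W v | v. v \<in> vec n}"

definition LA :: "nat \<Rightarrow> (nat \<Rightarrow> bool) set \<Rightarrow> (nat \<Rightarrow> bool) set \<Rightarrow> (nat \<Rightarrow> bool) set
    \<Rightarrow> (nat \<Rightarrow> bool) set set" where
  "LA n U W1 W2 = (let vb = (SOME v. v \<in> vec n \<and> v \<notin> U) in
     {coset W1 v | v. v \<in> U} \<union> {coset (coset W2 vb) v | v. v \<in> U})"

definition maps_onto :: "((nat \<Rightarrow> bool) \<Rightarrow> (nat \<Rightarrow> bool)) \<Rightarrow> (nat \<Rightarrow> bool) set set
    \<Rightarrow> (nat \<Rightarrow> bool) set set \<Rightarrow> bool" where
  "maps_onto g A B \<longleftrightarrow> (\<lambda>X. g ` X) ` A = B"

definition trivial_part :: "nat \<Rightarrow> (nat \<Rightarrow> bool) set set \<Rightarrow> bool" where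
  "trivial_part n P \<longleftrightarrow> P = {{v} | v. v \<in> vec n} \<or> P = {vec n}"

end

theory Submission
  imports Defs
begin


lemma vadd_comm: "vadd x y = vadd y x" by (auto simp: vadd_def fun_eq_iff)
lemma vadd_assoc: "vadd (vadd x y) z = vadd x (vadd y z)" by (auto simp: vadd_def fun_eq_iff)
lemma vadd_self[simp]: "vadd x x = zero" by (auto simp: vadd_def zero_def fun_eq_iff)
lemma vadd_zero[simp]: "vadd x zero = x" "vadd zero x = x" by (auto simp: vadd_def zero_def fun_eq_iff)
lemma vadd_cancel1[simp]: "vadd x (vadd x y) = y" "vadd (vadd y x) x = y"
  by (auto simp: vadd_def fun_eq_iff)
lemma vadd_cancel2[simp]: "vadd x (vadd y x) = y" "vadd (vadd x y) x = y"
  by (auto simp: vadd_def fun_eq_iff)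
lemma vadd_eq_zero_iff: "vadd x y = zero \<longleftrightarrow> x = y"
  by (auto simp: vadd_def zero_def fun_eq_iff)
lemma vadd_left_inj[simp]: "vadd x y = vadd x z \<longleftrightarrow> y = z"
  by (auto simp: vadd_def fun_eq_iff)
lemma vadd_right_inj[simp]: "vadd y x = vadd z x \<longleftrightarrow> y = z"
  by (auto simp: vadd_def fun_eq_iff)
lemma vec_vadd[simp,intro]: "x \<in> vec k \<Longrightarrow> y \<in> vec k \<Longrightarrow> vadd x y \<in> vec k"
  by (auto simp: vec_def vadd_def)
lemma zero_vec[simp,intro]: "zero \<in> vec k" by (auto simp: vec_def zero_def)

lemma finite_vec[simp]: "finite (vec k)" and card_vec: "card (vec k) = 2 ^ k"
proof -
  have e: "vec k = (\<lambda>S j. j \<in> S) ` Pow {..<k}"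
  proof
    show "vec k \<subseteq> (\<lambda>S j. j \<in> S) ` Pow {..<k}"
    proof
      fix v assume "v \<in> vec k"
      hence "v = (\<lambda>j. j \<in> {j. v j})" "{j. v j} \<in> Pow {..<k}"
        by (auto simp: vec_def) (meson not_le)
      thus "v \<in> (\<lambda>S j. j \<in> S) ` Pow {..<k}" by blast
    qed
  qed (auto simp: vec_def)
  have i: "inj_on (\<lambda>S j. j \<in> S) (Pow {..<k})"
    by (auto simp: inj_on_def fun_eq_iff)
  show "finite (vec k)" unfolding e by simp
  show "card (vec k) = 2 ^ k" unfolding e using card_image[OF i] by (simp add: card_Pow)
qed

lemma subspace_vec: "subspace k S \<Longrightarrow> S \<subseteq> vec k" by (simp add: subspace_def)
lemma subspace_zero: "subspace k S \<Longrightarrow> zero \<in> S" by (simp add: subspace_def)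
lemma subspace_add: "subspace k S \<Longrightarrow> x \<in> S \<Longrightarrow> y \<in> S \<Longrightarrow> vadd x y \<in> S"
  by (simp add: subspace_def)
lemma subspace_finite: "subspace k S \<Longrightarrow> finite S"
  by (rule finite_subset[OF subspace_vec finite_vec])

lemma card_coset: "card (coset W p) = card W"
  unfolding coset_def by (rule card_image) (simp add: inj_on_def)

lemma idx2:
  assumes S: "subspace k U" and c: "card (vec k) = 2 * card U"
    and x: "x \<in> vec k" "x \<notin> U" and y: "y \<in> vec k" "y \<notin> U"
  shows "vadd x y \<in> U"
proof -
  have fU: "finite U" using subspace_finite[OF S] .
  have sub: "(\<lambda>u. vadd x u) ` U \<subseteq> vec k - U"
  proof
    fix z assume "z \<in> (\<lambda>u. vadd x u) ` U"
    then obtain u where u: "u \<in> U" "z = vadd x u" by auto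
    have "z \<in> vec k" using u x subspace_vec[OF S] by auto
    moreover have "z \<notin> U"
    proof
      assume "z \<in> U" hence "vadd z u \<in> U" using u(1) by (rule subspace_add[OF S])
      moreover have "vadd z u = x" using u by simp
      ultimately show False using x by simp
    qed
    ultimately show "z \<in> vec k - U" by auto
  qed
  have ci: "card ((\<lambda>u. vadd x u) ` U) = card U"
    by (rule card_image) (auto simp: inj_on_def)
  have cd: "card (vec k - U) = card U"
    using c subspace_vec[OF S] fU by (simp add: card_Diff_subset)
  have "(\<lambda>u. vadd x u) ` U = vec k - U"
    by (rule card_subset_eq) (use sub ci cd in simp_all)
  with y obtain u where "u \<in> U" "y = vadd x u" by blast
  thus ?thesis by simp
qed

lemma idx2_card:
  assumes S: "subspace k H" and h: "h \<in> vec k" "h \<notin> H"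
    and i2: "\<forall>x\<in>vec k - H. \<forall>y\<in>vec k - H. vadd x y \<in> H"
  shows "card (vec k - H) = card H" "2 * card H = 2 ^ k"
proof -
  have fH: "finite H" using subspace_finite[OF S] .
  have "(\<lambda>u. vadd h u) ` H = vec k - H"
  proof
    show "(\<lambda>u. vadd h u) ` H \<subseteq> vec k - H"
    proof
      fix z assume "z \<in> (\<lambda>u. vadd h u) ` H"
      then obtain u where u: "u \<in> H" "z = vadd h u" by auto
      have "z \<in> vec k" using u h subspace_vec[OF S] by auto
      moreover have "z \<notin> H"
      proof
        assume "z \<in> H" hence "vadd z u \<in> H" using u(1) by (rule subspace_add[OF S])
        moreover have "vadd z u = h" using u by simp
        ultimately show False using h by simp
      qed
      ultimately show "z \<in> vec k - H" by auto
    qed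
  next
    show "vec k - H \<subseteq> (\<lambda>u. vadd h u) ` H"
    proof
      fix y assume "y \<in> vec k - H"
      hence "vadd h y \<in> H" using i2 h by auto
      moreover have "y = vadd h (vadd h y)" by simp
      ultimately show "y \<in> (\<lambda>u. vadd h u) ` H" by blast
    qed
  qed
  moreover have "card ((\<lambda>u. vadd h u) ` H) = card H"
    by (rule card_image) (auto simp: inj_on_def)
  ultimately show c1: "card (vec k - H) = card H" by simp
  have sv: "H \<subseteq> vec k" using subspace_vec[OF S] .
  have "card (vec k - H) = card (vec k) - card H" using card_Diff_subset[OF fH sv] .
  moreover have "card H \<le> card (vec k)" using card_mono[OF finite_vec sv] .
  ultimately have "card (vec k) = card (vec k - H) + card H" by simp
  thus "2 * card H = 2 ^ k" using c1 card_vec by simp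
qed



lemma ip_add: "ip k (vadd x y) v = (ip k x v \<noteq> ip k y v)"
proof -
  let ?A = "{j. j < k \<and> x j \<and> v j}" and ?B = "{j. j < k \<and> y j \<and> v j}"
  have C: "{j. j < k \<and> vadd x y j \<and> v j} = (?A - ?B) \<union> (?B - ?A)"
    by (auto simp: vadd_def)
  have f: "finite ?A" "finite ?B" by auto
  have c1: "card {j. j < k \<and> vadd x y j \<and> v j} = card (?A - ?B) + card (?B - ?A)"
    unfolding C by (rule card_Un_disjoint) auto
  have a: "card ?A = card (?A - ?B) + card (?A \<inter> ?B)"
  proof -
    have "?A = (?A - ?B) \<union> (?A \<inter> ?B)" by auto
    hence "card ?A = card ((?A - ?B) \<union> (?A \<inter> ?B))" by simp
    also have "\<dots> = card (?A - ?B) + card (?A \<inter> ?B)" by (rule card_Un_disjoint) auto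
    finally show ?thesis .
  qed
  have b: "card ?B = card (?B - ?A) + card (?A \<inter> ?B)"
  proof -
    have "?B = (?B - ?A) \<union> (?A \<inter> ?B)" by auto
    hence "card ?B = card ((?B - ?A) \<union> (?A \<inter> ?B))" by simp
    also have "\<dots> = card (?B - ?A) + card (?A \<inter> ?B)" by (rule card_Un_disjoint) auto
    finally show ?thesis .
  qed
  show ?thesis unfolding ip_def c1 a b by presburger
qed

lemma ip_zero[simp]: "ip k zero v = False" by (simp add: ip_def zero_def)

definition ev :: "nat \<Rightarrow> nat \<Rightarrow> bool" where "ev i = (\<lambda>j. j = i)"
definition tr :: "nat \<Rightarrow> (nat \<Rightarrow> bool) \<Rightarrow> (nat \<Rightarrow> bool)" where "tr t x = (\<lambda>j. j < t \<and> x j)"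

lemma tr0: "tr 0 x = zero" by (simp add: tr_def zero_def)
lemma trSuc: "tr (Suc t) x = vadd (tr t x) (if x t then ev t else zero)"
  by (auto simp: tr_def ev_def vadd_def zero_def fun_eq_iff less_Suc_eq)
lemma tr_full: "x \<in> vec k \<Longrightarrow> tr k x = x"
  by (auto simp: tr_def vec_def fun_eq_iff) (meson not_le)
lemma tr_vec: "x \<in> vec k \<Longrightarrow> tr t x \<in> vec k" by (auto simp: tr_def vec_def)
lemma ev_vec: "i < k \<Longrightarrow> ev i \<in> vec k" by (auto simp: ev_def vec_def)

lemma hyperplane_ip:
  assumes S: "subspace k H" and hv: "H \<noteq> vec k"
    and i2: "\<forall>x\<in>vec k - H. \<forall>y\<in>vec k - H. vadd x y \<in> H"
  shows "\<exists>v\<in>vec k. v \<noteq> zero \<and> (\<forall>x\<in>vec k. ip k x v = (x \<notin> H))"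
proof -
  have add: "(vadd x y \<notin> H) = ((x \<notin> H) \<noteq> (y \<notin> H))" if "x \<in> vec k" "y \<in> vec k" for x y
  proof (cases "x \<in> H")
    case True
    show ?thesis
    proof (cases "y \<in> H")
      case True thus ?thesis using \<open>x \<in> H\<close> subspace_add[OF S] by auto
    next
      case False
      have "vadd x y \<notin> H"
      proof
        assume "vadd x y \<in> H"
        hence "vadd x (vadd x y) \<in> H" using \<open>x \<in> H\<close> subspace_add[OF S] by blast
        thus False using False by simp
      qed
      thus ?thesis using True False by simp
    qed
  next
    case False
    show ?thesis
    proof (cases "y \<in> H")
      case True
      have "vadd x y \<notin> H"
      proof
        assume "vadd x y \<in> H"
        hence "vadd (vadd x y) y \<in> H" using \<open>y \<in> H\<close> subspace_add[OF S] by blast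
        thus False using False by simp
      qed
      thus ?thesis using True False by simp
    next
      case yF: False
      have "vadd x y \<in> H" using i2 that False yF by blast
      thus ?thesis using False yF by simp
    qed
  qed
  define v where "v = (\<lambda>i. i < k \<and> ev i \<notin> H)"
  have vv: "v \<in> vec k" by (auto simp: v_def vec_def)
  have key: "ip k (tr t x) v = (tr t x \<notin> H)" if x: "x \<in> vec k" and t: "t \<le> k" for x t
    using t
  proof (induction t)
    case 0 thus ?case using subspace_zero[OF S] by (simp add: tr0)
  next
    case (Suc t)
    have IH: "ip k (tr t x) v = (tr t x \<notin> H)" using Suc by simp
    have tv: "tr t x \<in> vec k" using tr_vec[OF x] .
    have ev: "(if x t then ev t else zero) \<in> vec k" using ev_vec Suc.prems by auto
    have ipe: "ip k (if x t then ev t else zero) v = ((if x t then ev t else zero) \<notin> H)"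
    proof (cases "x t")
      case True
      have "{j. j < k \<and> ev t j \<and> v j} = (if v t then {t} else {})"
        using Suc.prems by (auto simp: ev_def)
      hence "ip k (ev t) v = v t" by (simp add: ip_def)
      thus ?thesis using True Suc.prems by (simp add: v_def)
    next
      case False thus ?thesis using subspace_zero[OF S] by simp
    qed
    show ?case unfolding trSuc ip_add add[OF tv ev] IH ipe ..
  qed
  have main: "\<forall>x\<in>vec k. ip k x v = (x \<notin> H)"
    using key[of _ k] tr_full by auto
  have "v \<noteq> zero"
  proof
    assume "v = zero"
    hence "\<forall>x\<in>vec k. x \<in> H" using main by (simp add: ip_def zero_def)
    thus False using hv subspace_vec[OF S] by auto
  qed
  thus ?thesis using vv main by blast
qed

lemma proper_sub_ip:
  assumes T: "subspace k T" and tv: "T \<noteq> vec k"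
  shows "\<exists>v\<in>vec k. v \<noteq> zero \<and> (\<forall>t\<in>T. \<not> ip k t v)"
proof -
  define P where "P = {H. subspace k H \<and> T \<subseteq> H \<and> H \<noteq> vec k}"
  have fP: "finite P"
  proof -
    have "P \<subseteq> Pow (vec k)" by (auto simp: P_def subspace_def)
    thus ?thesis by (rule finite_subset) simp
  qed
  have TP: "T \<in> P" using T tv by (simp add: P_def)
  define M where "M = Max (card ` P)"
  have "M \<in> card ` P" unfolding M_def using fP TP by (intro Max_in) auto
  then obtain H where HP: "H \<in> P" and cH: "card H = M" by auto
  have maxH: "card H' \<le> card H" if "H' \<in> P" for H'
    using cH M_def fP that by (simp add: Max_ge)
  have S: "subspace k H" and TH: "T \<subseteq> H" and hv: "H \<noteq> vec k" using HP by (auto simp: P_def)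
  have i2: "\<forall>x\<in>vec k - H. \<forall>y\<in>vec k - H. vadd x y \<in> H"
  proof (intro ballI)
    fix x y assume x: "x \<in> vec k - H" and y: "y \<in> vec k - H"
    define H' where "H' = H \<union> coset H x"
    have sv: "H \<subseteq> vec k" using subspace_vec[OF S] .
    have S': "subspace k H'"
      unfolding subspace_def
    proof (intro conjI ballI)
      show "H' \<subseteq> vec k" using sv x by (auto simp: H'_def coset_def)
      show "zero \<in> H'" using subspace_zero[OF S] by (simp add: H'_def)
    next
      fix u w assume u: "u \<in> H'" and w: "w \<in> H'"
      show "vadd u w \<in> H'"
      proof (cases "u \<in> H")
        case True
        show ?thesis
        proof (cases "w \<in> H")
          case True thus ?thesis using \<open>u \<in> H\<close> subspace_add[OF S] by (simp add: H'_def)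
        next
          case False
          then obtain h where h: "h \<in> H" "w = vadd h x" using w by (auto simp: H'_def coset_def)
          have "vadd u w = vadd (vadd u h) x" using h by (simp add: vadd_assoc)
          moreover have "vadd u h \<in> H" using \<open>u \<in> H\<close> h subspace_add[OF S] by blast
          ultimately show ?thesis by (auto simp: H'_def coset_def)
        qed
      next
        case False
        then obtain h where h: "h \<in> H" "u = vadd h x" using u by (auto simp: H'_def coset_def)
        show ?thesis
        proof (cases "w \<in> H")
          case True
          have "vadd u w = vadd (vadd h w) x" using h by (metis vadd_assoc vadd_comm)
          moreover have "vadd h w \<in> H" using True h subspace_add[OF S] by blast
          ultimately show ?thesis by (auto simp: H'_def coset_def)
        next
          case wF: False
          then obtain h' where h': "h' \<in> H" "w = vadd h' x" using w by (auto simp: H'_def coset_def)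
          have "vadd u w = vadd h h'" using h h' by (metis vadd_assoc vadd_cancel1(2) vadd_comm)
          moreover have "vadd h h' \<in> H" using h h' subspace_add[OF S] by blast
          ultimately show ?thesis by (simp add: H'_def)
        qed
      qed
    qed
    have "x \<in> H'" using subspace_zero[OF S] by (force simp: H'_def coset_def)
    hence "card H < card H'"
      using x S' subspace_finite by (intro psubset_card_mono) (auto simp: H'_def)
    hence "H' \<notin> P" using maxH by force
    hence "H' = vec k" using S' TH by (auto simp: P_def H'_def)
    hence "y \<in> coset H x" using y by (auto simp: H'_def)
    then obtain h where "h \<in> H" "y = vadd h x" by (auto simp: coset_def)
    thus "vadd x y \<in> H" by (simp add: vadd_comm)
  qed
  obtain v where v: "v \<in> vec k" "v \<noteq> zero" "\<forall>x\<in>vec k. ip k x v = (x \<notin> H)"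
    using hyperplane_ip[OF S hv i2] by blast
  have "\<forall>t\<in>T. \<not> ip k t v" using v TH subspace_vec[OF T] by blast
  thus ?thesis using v by blast
qed


section \<open>Block layer\<close>

definition upd :: "nat \<Rightarrow> nat \<Rightarrow> (nat \<Rightarrow> bool) \<Rightarrow> (nat \<Rightarrow> bool) \<Rightarrow> (nat \<Rightarrow> bool)" where
  "upd m j u x = (\<lambda>k. if k div m = j then u (k mod m) else x k)"

abbreviation emb :: "nat \<Rightarrow> nat \<Rightarrow> (nat \<Rightarrow> bool) \<Rightarrow> (nat \<Rightarrow> bool)" where
  "emb m j u \<equiv> upd m j u zero"


lemma blk_vec[simp]: "blk m i v \<in> vec m" by (simp add: blk_def vec_def)

lemma blk_upd_same[simp]: "0 < m \<Longrightarrow> u \<in> vec m \<Longrightarrow> blk m j (upd m j u x) = u"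
  by (auto simp: blk_def upd_def fun_eq_iff vec_def)

lemma blk_upd_other[simp]: "0 < m \<Longrightarrow> i \<noteq> j \<Longrightarrow> blk m i (upd m j u x) = blk m i x"
  by (auto simp: blk_def upd_def fun_eq_iff)

lemma div_ge_b: "0 < (m::nat) \<Longrightarrow> m * b \<le> k \<Longrightarrow> b \<le> k div m"
  using div_le_mono[of "m * b" k m] by simp

lemma div_lt_b: "0 < (m::nat) \<Longrightarrow> k < m * b \<Longrightarrow> k div m < b"
  by (simp add: div_less_iff_less_mult mult.commute)

lemma upd_vec[simp,intro]: "0 < m \<Longrightarrow> j < b \<Longrightarrow> x \<in> vec (m * b) \<Longrightarrow> upd m j u x \<in> vec (m * b)"
proof -
  assume m: "0 < m" and j: "j < b" and x: "x \<in> vec (m * b)"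
  show ?thesis unfolding vec_def
  proof (intro CollectI allI impI)
    fix k assume k: "m * b \<le> k"
    hence "k div m \<noteq> j" using div_ge_b[OF m k] j by simp
    thus "\<not> upd m j u x k" using x k by (simp add: upd_def vec_def)
  qed
qed

lemma blk_vadd: "blk m i (vadd x y) = vadd (blk m i x) (blk m i y)"
  by (auto simp: blk_def vadd_def fun_eq_iff)

lemma blk_zero[simp]: "blk m i zero = zero" by (auto simp: blk_def zero_def fun_eq_iff)

lemma blk_at: "0 < m \<Longrightarrow> blk m (k div m) x (k mod m) = x k"
  by (simp add: blk_def)

lemma vec_eq_blk:
  assumes m: "0 < m" and x: "x \<in> vec (m * b)" and y: "y \<in> vec (m * b)"
    and e: "\<forall>i<b. blk m i x = blk m i y"
  shows "x = y"
proof
  fix k show "x k = y k"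
  proof (cases "k < m * b")
    case True
    hence "k div m < b" using div_lt_b m by blast
    hence "blk m (k div m) x (k mod m) = blk m (k div m) y (k mod m)" using e by simp
    thus ?thesis using blk_at[OF m] by simp
  next
    case False thus ?thesis using x y by (auto simp: vec_def)
  qed
qed

lemma par_vec[simp,intro]: "par m b g x \<in> vec (m * b)"
  by (simp add: par_def vec_def)

lemma blk_par:
  assumes m: "0 < m" and i: "i < b" and gv: "g i (blk m i x) \<in> vec m"
  shows "blk m i (par m b g x) = g i (blk m i x)"
proof
  fix j show "blk m i (par m b g x) j = g i (blk m i x) j"
  proof (cases "j < m")
    case True
    have "i * m + j < m * b"
    proof -
      have "i * m + j < i * m + m" using True by simp
      also have "\<dots> = (i + 1) * m" by simp
      also have "\<dots> \<le> b * m" using i by (intro mult_le_mono1) simp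
      finally show ?thesis by (simp add: mult.commute)
    qed
    thus ?thesis using True m by (simp add: blk_def par_def)
  next
    case False thus ?thesis using gv by (simp add: blk_def vec_def)
  qed
qed

lemma upd_vadd: "vadd (upd m j u x) (upd m j u' x') = upd m j (vadd u u') (vadd x x')"
  by (auto simp: upd_def vadd_def fun_eq_iff)

lemma upd_zero_zero[simp]: "upd m j zero zero = zero"
  by (auto simp: upd_def zero_def fun_eq_iff)

lemma emb_inj: "0 < m \<Longrightarrow> u \<in> vec m \<Longrightarrow> u' \<in> vec m \<Longrightarrow> emb m j u = emb m j u' \<Longrightarrow> u = u'"
  by (metis blk_upd_same)

lemma blk_emb_other[simp]: "0 < m \<Longrightarrow> i \<noteq> j \<Longrightarrow> blk m i (emb m j u) = zero"
  by simp

lemma upd_as_vadd: "0 < m \<Longrightarrow> blk m j x = zero \<Longrightarrow> upd m j u x = vadd x (emb m j u)"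
proof -
  assume m: "0 < m" and z: "blk m j x = zero"
  show ?thesis
  proof
    fix k show "upd m j u x k = vadd x (emb m j u) k"
    proof (cases "k div m = j")
      case True
      have "x k = blk m j x (k mod m)" using blk_at[OF m, of k x] True by simp
      hence "x k = False" using z by (simp add: zero_def)
      thus ?thesis using True by (simp add: upd_def vadd_def)
    next
      case False thus ?thesis by (simp add: upd_def vadd_def zero_def)
    qed
  qed
qed

lemma par_upd:
  assumes m: "0 < m" and j: "j < b" and u: "u \<in> vec m" and x: "x \<in> vec (m * b)"
    and gv: "\<forall>i<b. \<forall>w\<in>vec m. g i w \<in> vec m"
  shows "par m b g (upd m j u x) = upd m j (g j u) (par m b g x)"
proof (rule vec_eq_blk[OF m])
  show "par m b g (upd m j u x) \<in> vec (m * b)" by simp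
  show "upd m j (g j u) (par m b g x) \<in> vec (m * b)" using m j by simp
  show "\<forall>i<b. blk m i (par m b g (upd m j u x)) = blk m i (upd m j (g j u) (par m b g x))"
  proof (intro allI impI)
    fix i assume i: "i < b"
    show "blk m i (par m b g (upd m j u x)) = blk m i (upd m j (g j u) (par m b g x))"
    proof (cases "i = j")
      case True
      thus ?thesis using m i u gv by (simp add: blk_par)
    next
      case False
      thus ?thesis using m i u gv by (simp add: blk_par)
    qed
  qed
qed

definition trb :: "nat \<Rightarrow> nat \<Rightarrow> (nat \<Rightarrow> bool) \<Rightarrow> (nat \<Rightarrow> bool)" where
  "trb m t x = (\<lambda>k. k div m < t \<and> x k)"

lemma dec:
  assumes m: "0 < m" and S: "subspace (m * b) S" and x: "x \<in> vec (m * b)"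
    and h: "\<forall>i<b. emb m i (blk m i x) \<in> S"
  shows "x \<in> S"
proof -
  have st: "trb m (Suc t) x = vadd (trb m t x) (emb m t (blk m t x))" for t
  proof
    fix k
    have "blk m t x (k mod m) = x k" if "k div m = t" using blk_at[OF m, of k x] that by simp
    thus "trb m (Suc t) x k = vadd (trb m t x) (emb m t (blk m t x)) k"
      by (auto simp: trb_def vadd_def upd_def zero_def less_Suc_eq)
  qed
  have "t \<le> b \<Longrightarrow> trb m t x \<in> S" for t
  proof (induction t)
    case 0
    have "trb m 0 x = zero" by (simp add: trb_def zero_def)
    thus ?case using subspace_zero[OF S] by simp
  next
    case (Suc t)
    thus ?case unfolding st using h subspace_add[OF S] by simp
  qed
  moreover have "trb m b x = x"
  proof
    fix k show "trb m b x k = x k"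
    proof (cases "k < m * b")
      case True thus ?thesis using div_lt_b[OF m] by (simp add: trb_def)
    next
      case False thus ?thesis using x by (simp add: trb_def vec_def)
    qed
  qed
  ultimately show ?thesis by force
qed

lemma emb_vec: "0 < m \<Longrightarrow> j < b \<Longrightarrow> emb m j u \<in> vec (m * b)"
  by simp

lemma block_emb: "0 < m \<Longrightarrow> j < b \<Longrightarrow> block m b j = emb m j ` vec m"
proof
  assume m: "0 < m" and j: "j < b"
  show "block m b j \<subseteq> emb m j ` vec m"
  proof
    fix v assume v: "v \<in> block m b j"
    have "v = emb m j (blk m j v)"
    proof
      fix k show "v k = emb m j (blk m j v) k"
      proof (cases "k div m = j")
        case True thus ?thesis using blk_at[OF m, of k v] by (simp add: upd_def)
      next
        case False
        have "\<not> v k" using v False by (auto simp: block_def)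
        thus ?thesis using False by (simp add: upd_def zero_def)
      qed
    qed
    moreover have "blk m j v \<in> vec m" by (rule blk_vec)
    ultimately show "v \<in> emb m j ` vec m" by (rule image_eqI)
  qed
  show "emb m j ` vec m \<subseteq> block m b j"
  proof
    fix v assume "v \<in> emb m j ` vec m"
    then obtain u where v: "v = emb m j u" by blast
    have "v \<in> vec (m * b)" unfolding v using m j by (intro upd_vec) auto
    moreover have "\<forall>k. v k \<longrightarrow> k div m = j" unfolding v by (simp add: upd_def zero_def)
    ultimately show "v \<in> block m b j" by (simp add: block_def)
  qed
qed

lemma J_iff: "0 < m \<Longrightarrow> j \<in> J m b U \<longleftrightarrow> j < b \<and> (\<exists>u\<in>vec m. emb m j u \<notin> U)"
proof -
  assume m: "0 < m"
  have "j \<in> J m b U \<longleftrightarrow> j < b \<and> \<not> block m b j \<subseteq> U" unfolding J_def by blast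
  also have "\<dots> \<longleftrightarrow> j < b \<and> (\<exists>u\<in>vec m. emb m j u \<notin> U)"
  proof (cases "j < b")
    case True
    show ?thesis unfolding block_emb[OF m True] using True by blast
  qed simp
  finally show ?thesis .
qed




section \<open>LA partitions as equivalence classes\<close>

definition eqr :: "(nat \<Rightarrow> bool) set \<Rightarrow> (nat \<Rightarrow> bool) set \<Rightarrow> (nat \<Rightarrow> bool) set
   \<Rightarrow> (nat \<Rightarrow> bool) \<Rightarrow> (nat \<Rightarrow> bool) \<Rightarrow> bool" where
  "eqr U W1 W2 x y = ((x \<in> U \<and> y \<in> U \<and> vadd x y \<in> W1) \<or> (x \<notin> U \<and> y \<notin> U \<and> vadd x y \<in> W2))"

definition cls where "cls n U W1 W2 x = {y \<in> vec n. eqr U W1 W2 x y}"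

locale lapart =
  fixes n :: nat and U W1 W2 :: "(nat \<Rightarrow> bool) set"
  assumes U: "subspace n U" and cU: "card (vec n) = 2 * card U"
    and W1: "subspace n W1" "W1 \<subseteq> U" and W2: "subspace n W2" "W2 \<subseteq> U"
begin

lemma U_ne: "\<exists>v. v \<in> vec n \<and> v \<notin> U"
proof (rule ccontr)
  assume "\<not> ?thesis"
  hence "vec n \<subseteq> U" by blast
  hence "vec n = U" using subspace_vec[OF U] by blast
  thus False using cU card_vec[of n] by simp
qed

lemma U_i2: "x \<in> vec n \<Longrightarrow> x \<notin> U \<Longrightarrow> y \<in> vec n \<Longrightarrow> y \<notin> U \<Longrightarrow> vadd x y \<in> U"
  using idx2[OF U cU] by blast

lemma U_in_out: "x \<in> U \<Longrightarrow> y \<notin> U \<Longrightarrow> vadd x y \<notin> U"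
proof
  assume x: "x \<in> U" and y: "y \<notin> U" and s: "vadd x y \<in> U"
  have "vadd x (vadd x y) \<in> U" using subspace_add[OF U x s] .
  thus False using y by simp
qed

lemma eqr_refl: "eqr U W1 W2 x x"
  using subspace_zero[OF W1(1)] subspace_zero[OF W2(1)] by (simp add: eqr_def)

lemma eqr_sym: "eqr U W1 W2 x y \<Longrightarrow> eqr U W1 W2 y x"
  by (auto simp: eqr_def vadd_comm)

lemma eqr_trans: "eqr U W1 W2 x y \<Longrightarrow> eqr U W1 W2 y z \<Longrightarrow> eqr U W1 W2 x z"
proof -
  assume a: "eqr U W1 W2 x y" and c: "eqr U W1 W2 y z"
  have e: "vadd x z = vadd (vadd x y) (vadd y z)" by (simp add: vadd_assoc)
  show ?thesis
  proof (cases "x \<in> U")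
    case True
    hence "y \<in> U" "vadd x y \<in> W1" using a by (auto simp: eqr_def)
    hence "z \<in> U" "vadd y z \<in> W1" using c by (auto simp: eqr_def)
    thus ?thesis using True \<open>vadd x y \<in> W1\<close> subspace_add[OF W1(1)] e by (simp add: eqr_def)
  next
    case False
    hence "y \<notin> U" "vadd x y \<in> W2" using a by (auto simp: eqr_def)
    hence "z \<notin> U" "vadd y z \<in> W2" using c by (auto simp: eqr_def)
    thus ?thesis using False \<open>vadd x y \<in> W2\<close> subspace_add[OF W2(1)] e by (simp add: eqr_def)
  qed
qed

lemma cls_eq: "y \<in> cls n U W1 W2 x \<Longrightarrow> cls n U W1 W2 y = cls n U W1 W2 x"
  unfolding cls_def using eqr_sym eqr_trans by blast

lemma LA_cls: "LA n U W1 W2 = {cls n U W1 W2 x | x. x \<in> vec n}"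
proof -
  define vb where "vb = (SOME v. v \<in> vec n \<and> v \<notin> U)"
  have vb: "vb \<in> vec n" "vb \<notin> U" using someI_ex[OF U_ne] by (auto simp: vb_def)
  have sU: "U \<subseteq> vec n" using subspace_vec[OF U] .
  have c1: "coset W1 v = cls n U W1 W2 v" if v: "v \<in> U" for v
  proof
    show "coset W1 v \<subseteq> cls n U W1 W2 v"
    proof
      fix y assume "y \<in> coset W1 v"
      then obtain w where w: "w \<in> W1" "y = vadd w v" by (auto simp: coset_def)
      have "y \<in> U" using w v W1 subspace_add[OF U] by blast
      moreover have "vadd v y = w" using w by simp
      ultimately show "y \<in> cls n U W1 W2 v" using v w sU by (auto simp: cls_def eqr_def)
    qed
    show "cls n U W1 W2 v \<subseteq> coset W1 v"
    proof
      fix y assume "y \<in> cls n U W1 W2 v"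
      hence "vadd v y \<in> W1" using v by (auto simp: cls_def eqr_def)
      have "y = vadd (vadd v y) v" by simp
      thus "y \<in> coset W1 v" unfolding coset_def using \<open>vadd v y \<in> W1\<close> by (rule image_eqI)
    qed
  qed
  have c2: "coset (coset W2 vb) v = cls n U W1 W2 (vadd vb v)" if v: "v \<in> U" for v
  proof
    have xo: "vadd vb v \<notin> U" using U_in_out[OF v vb(2)] by (simp add: vadd_comm)
    show "coset (coset W2 vb) v \<subseteq> cls n U W1 W2 (vadd vb v)"
    proof
      fix y assume "y \<in> coset (coset W2 vb) v"
      then obtain w where w: "w \<in> W2" "y = vadd (vadd w vb) v" by (auto simp: coset_def)
      have yx: "y = vadd w (vadd vb v)" using w by (simp add: vadd_assoc)
      have "y \<notin> U" unfolding yx using U_in_out[OF _ xo] w W2 by blast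
      moreover have "vadd (vadd vb v) y = w" unfolding yx by simp
      moreover have "y \<in> vec n" unfolding yx using w W2 vb v sU subspace_vec by blast
      ultimately show "y \<in> cls n U W1 W2 (vadd vb v)" using xo w by (auto simp: cls_def eqr_def)
    qed
    show "cls n U W1 W2 (vadd vb v) \<subseteq> coset (coset W2 vb) v"
    proof
      fix y assume "y \<in> cls n U W1 W2 (vadd vb v)"
      hence "vadd (vadd vb v) y \<in> W2" using xo by (auto simp: cls_def eqr_def)
      moreover have "y = vadd (vadd (vadd (vadd vb v) y) vb) v"
        by (metis vadd_assoc vadd_cancel1(1) vadd_comm)
      ultimately show "y \<in> coset (coset W2 vb) v" unfolding coset_def by blast
    qed
  qed
  have "LA n U W1 W2 = {coset W1 v | v. v \<in> U} \<union> {coset (coset W2 vb) v | v. v \<in> U}"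
    by (simp add: LA_def vb_def Let_def)
  also have "\<dots> = {cls n U W1 W2 x | x. x \<in> vec n}"
  proof
    show "{coset W1 v | v. v \<in> U} \<union> {coset (coset W2 vb) v | v. v \<in> U}
        \<subseteq> {cls n U W1 W2 x | x. x \<in> vec n}"
    proof
      fix X assume "X \<in> {coset W1 v | v. v \<in> U} \<union> {coset (coset W2 vb) v | v. v \<in> U}"
      then consider v where "v \<in> U" "X = coset W1 v" | v where "v \<in> U" "X = coset (coset W2 vb) v"
        by blast
      thus "X \<in> {cls n U W1 W2 x | x. x \<in> vec n}"
      proof cases
        case 1 thus ?thesis using c1 sU by blast
      next
        case 2
        hence "vadd vb v \<in> vec n" using vb sU by blast
        thus ?thesis using 2 c2 by blast
      qed
    qed
    show "{cls n U W1 W2 x | x. x \<in> vec n}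
        \<subseteq> {coset W1 v | v. v \<in> U} \<union> {coset (coset W2 vb) v | v. v \<in> U}"
    proof
      fix X assume "X \<in> {cls n U W1 W2 x | x. x \<in> vec n}"
      then obtain x where x: "x \<in> vec n" "X = cls n U W1 W2 x" by blast
      show "X \<in> {coset W1 v | v. v \<in> U} \<union> {coset (coset W2 vb) v | v. v \<in> U}"
      proof (cases "x \<in> U")
        case True thus ?thesis using x c1 by blast
      next
        case False
        have v: "vadd vb x \<in> U" using U_i2[OF vb x(1) False] .
        have "X = coset (coset W2 vb) (vadd vb x)" using c2[OF v] x by simp
        thus ?thesis using v by blast
      qed
    qed
  qed
  finally show ?thesis .
qed

end

lemma corr:
  assumes A: "lapart n U W1 W2" and B: "lapart n U' W1' W2'"
    and inj: "inj_on f (vec n)" and fv: "\<forall>x\<in>vec n. f x \<in> vec n"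
    and mo: "maps_onto f (LA n U W1 W2) (LA n U' W1' W2')"
    and x: "x \<in> vec n" and y: "y \<in> vec n"
  shows "eqr U W1 W2 x y = eqr U' W1' W2' (f x) (f y)"
proof -
  interpret a: lapart n U W1 W2 by (rule A)
  interpret b: lapart n U' W1' W2' by (rule B)
  have "cls n U W1 W2 x \<in> LA n U W1 W2" using x a.LA_cls by blast
  hence "f ` cls n U W1 W2 x \<in> LA n U' W1' W2'" using mo by (auto simp: maps_onto_def)
  then obtain z where z: "z \<in> vec n" "f ` cls n U W1 W2 x = cls n U' W1' W2' z"
    using b.LA_cls by blast
  have "x \<in> cls n U W1 W2 x" using x a.eqr_refl by (simp add: cls_def)
  hence "f x \<in> cls n U' W1' W2' z" using z by blast
  hence e: "f ` cls n U W1 W2 x = cls n U' W1' W2' (f x)" using z b.cls_eq by simp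
  have "eqr U W1 W2 x y \<longleftrightarrow> y \<in> cls n U W1 W2 x" using y by (simp add: cls_def)
  also have "\<dots> \<longleftrightarrow> f y \<in> f ` cls n U W1 W2 x"
  proof
    assume "f y \<in> f ` cls n U W1 W2 x"
    then obtain y' where "y' \<in> cls n U W1 W2 x" "f y = f y'" by blast
    moreover hence "y' \<in> vec n" by (simp add: cls_def)
    ultimately show "y \<in> cls n U W1 W2 x" using inj y by (metis inj_onD)
  qed blast
  also have "\<dots> \<longleftrightarrow> eqr U' W1' W2' (f x) (f y)" using e fv y by (simp add: cls_def)
  finally show ?thesis .
qed



definition sl :: "nat \<Rightarrow> nat \<Rightarrow> (nat \<Rightarrow> bool) set \<Rightarrow> (nat \<Rightarrow> bool) set" where
  "sl m j S = {u \<in> vec m. emb m j u \<in> S}"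

lemma sl_subspace:
  assumes m: "0 < m" and j: "j < b" and S: "subspace (m * b) S"
  shows "subspace m (sl m j S)"
  unfolding subspace_def sl_def
proof (intro conjI ballI)
  show "zero \<in> {u \<in> vec m. emb m j u \<in> S}" using subspace_zero[OF S] by simp
next
  fix u v assume u: "u \<in> {u \<in> vec m. emb m j u \<in> S}" and v: "v \<in> {u \<in> vec m. emb m j u \<in> S}"
  have "vadd (emb m j u) (emb m j v) \<in> S" using u v subspace_add[OF S] by blast
  hence "emb m j (vadd u v) \<in> S" by (simp add: upd_vadd)
  thus "vadd u v \<in> {u \<in> vec m. emb m j u \<in> S}" using u v by simp
qed auto

locale mainL =
  fixes m b :: nat and g :: "nat \<Rightarrow> (nat \<Rightarrow> bool) \<Rightarrow> (nat \<Rightarrow> bool)"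
    and U W1 W2 U' W1' W2' :: "(nat \<Rightarrow> bool) set"
  assumes m4: "4 \<le> m" and b1: "1 < b"
    and perm: "\<forall>i<b. bij_betw (g i) (vec m) (vec m)"
    and g0: "\<forall>i<b. g i zero = zero"
    and du: "\<forall>i<b. diff_unif m (g i) = 4"
    and nh: "\<forall>i<b. nhat m (g i) = 0"
    and A: "lapart (m * b) U W1 W2" and B: "lapart (m * b) U' W1' W2'"
    and corr: "\<forall>x\<in>vec (m * b). \<forall>y\<in>vec (m * b).
                 eqr U W1 W2 x y = eqr U' W1' W2' (par m b g x) (par m b g y)"
    and nontriv: "\<not> (W1' = {zero} \<and> W2' = {zero})"
    and disj: "J m b U \<inter> J m b U' = {}"
begin

abbreviation "n \<equiv> m * b"
abbreviation "gam \<equiv> par m b g"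

sublocale a: lapart "m * b" U W1 W2 by (rule A)
sublocale c: lapart "m * b" U' W1' W2' by (rule B)

lemma m0: "0 < m" using m4 by simp

lemma bij_i: "i < b \<Longrightarrow> bij_betw (g i) (vec m) (vec m)" using perm by simp

lemma gv: "i < b \<Longrightarrow> w \<in> vec m \<Longrightarrow> g i w \<in> vec m"
  by (rule bij_betw_apply[OF bij_i])

lemma gvall: "\<forall>i<b. \<forall>w\<in>vec m. g i w \<in> vec m" using gv by simp

lemma ginj: "i < b \<Longrightarrow> u \<in> vec m \<Longrightarrow> u' \<in> vec m \<Longrightarrow> g i u = g i u' \<Longrightarrow> u = u'"
  using inj_onD[OF bij_betw_imp_inj_on[OF bij_i]] by blast

lemma gsurj: "i < b \<Longrightarrow> w \<in> vec m \<Longrightarrow> \<exists>u\<in>vec m. g i u = w"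
proof -
  assume i: "i < b" and w: "w \<in> vec m"
  have "g i ` vec m = vec m" using bij_betw_imp_surj_on[OF bij_i[OF i]] .
  thus ?thesis using w by force
qed

lemma blk_gam: "i < b \<Longrightarrow> blk m i (gam x) = g i (blk m i x)"
proof -
  assume i: "i < b"
  show ?thesis by (rule blk_par[OF m0 i]) (rule gv[OF i blk_vec])
qed

lemma gam_zero: "gam zero = zero"
proof (rule vec_eq_blk[OF m0])
  show "\<forall>i<b. blk m i (gam zero) = blk m i zero" using blk_gam g0 by simp
qed auto

lemma gam_upd: "j < b \<Longrightarrow> u \<in> vec m \<Longrightarrow> x \<in> vec n \<Longrightarrow> gam (upd m j u x) = upd m j (g j u) (gam x)"
  using par_upd[OF m0 _ _ _ gvall] by blast

lemma gam_emb: "j < b \<Longrightarrow> u \<in> vec m \<Longrightarrow> gam (emb m j u) = emb m j (g j u)"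
  using gam_upd[of j u zero] gam_zero by simp

lemma gam_inj: "x \<in> vec n \<Longrightarrow> y \<in> vec n \<Longrightarrow> gam x = gam y \<Longrightarrow> x = y"
proof -
  assume x: "x \<in> vec n" and y: "y \<in> vec n" and e: "gam x = gam y"
  show "x = y"
  proof (rule vec_eq_blk[OF m0 x y], intro allI impI)
    fix i assume i: "i < b"
    have "g i (blk m i x) = g i (blk m i y)" using e blk_gam[OF i, of x] blk_gam[OF i, of y] by simp
    thus "blk m i x = blk m i y" using ginj[OF i blk_vec blk_vec] by blast
  qed
qed

lemma gam_inj_on: "inj_on gam (vec n)" using gam_inj by (intro inj_onI) blast

lemma gam_surj: "gam ` vec n = vec n"
  by (rule endo_inj_surj) (simp_all add: gam_inj_on image_subset_iff)

lemma gam_surj_pt: "y \<in> vec n \<Longrightarrow> \<exists>x\<in>vec n. gam x = y"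
  using gam_surj by force

lemma eqrB_sub: "eqr U' W1' W2' p q \<Longrightarrow> vadd p q \<in> U'"
  using c.W1 c.W2 by (auto simp: eqr_def)

lemma du_le:
  assumes i: "i < b" and al: "al \<in> vec m" "al \<noteq> zero" and c: "c \<in> vec m"
  shows "card {x \<in> vec m. fder (g i) al x = c} \<le> 4"
proof -
  let ?S = "{card {x \<in> vec m. fder (g i) a x = c} | a c. a \<in> vec m \<and> a \<noteq> zero \<and> c \<in> vec m}"
  have "?S = (\<lambda>(a, c). card {x \<in> vec m. fder (g i) a x = c}) ` {(a, c). a \<in> vec m \<and> a \<noteq> zero \<and> c \<in> vec m}"
    by auto
  moreover have "finite {(a, c). a \<in> vec m \<and> a \<noteq> zero \<and> c \<in> vec m}"
    by (rule finite_subset[of _ "vec m \<times> vec m"]) auto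
  ultimately have fin: "finite ?S" by simp
  have "card {x \<in> vec m. fder (g i) al x = c} \<in> ?S" using al c by blast
  hence "card {x \<in> vec m. fder (g i) al x = c} \<le> Max ?S" using fin by (rule Max_ge[rotated])
  thus ?thesis using du i by (simp add: diff_unif_def)
qed

lemma fder_vec: "i < b \<Longrightarrow> u \<in> vec m \<Longrightarrow> al \<in> vec m \<Longrightarrow> fder (g i) al u \<in> vec m"
  by (simp add: fder_def gv)

lemma nh_contra:
  assumes j: "j < b" and al: "al \<in> vec m" "al \<noteq> zero"
    and T: "subspace m T" "T \<noteq> vec m"
    and h: "\<forall>u\<in>vec m. \<forall>u'\<in>vec m. vadd (fder (g j) al u) (fder (g j) al u') \<in> T"
  shows False
proof -
  obtain v where v: "v \<in> vec m" "v \<noteq> zero" "\<forall>t\<in>T. \<not> ip m t v"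
    using proper_sub_ip[OF T] by blast
  let ?c = "ip m (fder (g j) al zero) v"
  have "\<forall>x\<in>vec m. ip m (fder (g j) al x) v = ?c"
  proof
    fix x assume x: "x \<in> vec m"
    have "vadd (fder (g j) al x) (fder (g j) al zero) \<in> T" using h x by simp
    hence "\<not> ip m (vadd (fder (g j) al x) (fder (g j) al zero)) v" using v by blast
    thus "ip m (fder (g j) al x) v = ?c" by (simp add: ip_add)
  qed
  hence vin: "v \<in> {v \<in> vec m. v \<noteq> zero \<and> (\<exists>c. \<forall>x\<in>vec m. ip m (fder (g j) al x) v = c)}"
    using v by blast
  let ?S = "{card {v \<in> vec m. v \<noteq> zero \<and> (\<exists>c. \<forall>x\<in>vec m. ip m (fder (g j) a x) v = c)} | a. a \<in> vec m \<and> a \<noteq> zero}"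
  have "?S = (\<lambda>a. card {v \<in> vec m. v \<noteq> zero \<and> (\<exists>c. \<forall>x\<in>vec m. ip m (fder (g j) a x) v = c)}) ` {a \<in> vec m. a \<noteq> zero}"
    by auto
  hence fin: "finite ?S" by simp
  have "card {v \<in> vec m. v \<noteq> zero \<and> (\<exists>c. \<forall>x\<in>vec m. ip m (fder (g j) al x) v = c)} \<in> ?S"
    using al by blast
  hence "card {v \<in> vec m. v \<noteq> zero \<and> (\<exists>c. \<forall>x\<in>vec m. ip m (fder (g j) al x) v = c)} \<le> Max ?S"
    using fin by (rule Max_ge[rotated])
  hence "card {v \<in> vec m. v \<noteq> zero \<and> (\<exists>c. \<forall>x\<in>vec m. ip m (fder (g j) al x) v = c)} = 0"
    using nh j by (simp add: nhat_def)
  moreover have "finite {v \<in> vec m. v \<noteq> zero \<and> (\<exists>c. \<forall>x\<in>vec m. ip m (fder (g j) al x) v = c)}"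
    by simp
  ultimately have "{v \<in> vec m. v \<noteq> zero \<and> (\<exists>c. \<forall>x\<in>vec m. ip m (fder (g j) al x) v = c)} = {}"
    by (simp only: card_0_eq)
  thus False using vin by (simp only: empty_iff)
qed

lemma der:
  assumes j: "j < b" and x: "x \<in> vec n" and a: "a \<in> vec n" and u: "u \<in> vec m" and u': "u' \<in> vec m"
  shows "vadd (vadd (gam (upd m j u x)) (gam (vadd (upd m j u x) a)))
               (vadd (gam (upd m j u' x)) (gam (vadd (upd m j u' x) a)))
         = emb m j (vadd (fder (g j) (blk m j a) u) (fder (g j) (blk m j a) u'))"
proof (rule vec_eq_blk[OF m0])
  show "vadd (vadd (gam (upd m j u x)) (gam (vadd (upd m j u x) a)))
               (vadd (gam (upd m j u' x)) (gam (vadd (upd m j u' x) a))) \<in> vec n" by auto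
  show "emb m j (vadd (fder (g j) (blk m j a) u) (fder (g j) (blk m j a) u')) \<in> vec n"
    using j m0 by simp
  show "\<forall>i<b. blk m i (vadd (vadd (gam (upd m j u x)) (gam (vadd (upd m j u x) a)))
               (vadd (gam (upd m j u' x)) (gam (vadd (upd m j u' x) a)))) =
        blk m i (emb m j (vadd (fder (g j) (blk m j a) u) (fder (g j) (blk m j a) u')))"
  proof (intro allI impI)
    fix i assume i: "i < b"
    show "blk m i (vadd (vadd (gam (upd m j u x)) (gam (vadd (upd m j u x) a)))
               (vadd (gam (upd m j u' x)) (gam (vadd (upd m j u' x) a)))) =
        blk m i (emb m j (vadd (fder (g j) (blk m j a) u) (fder (g j) (blk m j a) u')))"
    proof (cases "i = j")
      case True
      have fv: "vadd (fder (g j) (blk m j a) u) (fder (g j) (blk m j a) u') \<in> vec m"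
        using fder_vec j u u' by simp
      show ?thesis using True i u u' m0 fv
        by (simp add: blk_vadd blk_gam fder_def vadd_comm)
    next
      case False
      show ?thesis using False i u u' m0 by (simp add: blk_vadd blk_gam)
    qed
  qed
qed

end



lemma vadd_swap: "vadd p q = vadd p' q' \<Longrightarrow> vadd p p' = vadd q q'"
  by (auto simp: vadd_def fun_eq_iff)

context mainL
begin

lemma sU: "U \<subseteq> vec n" using subspace_vec[OF a.U] .
lemma sU': "U' \<subseteq> vec n" using subspace_vec[OF c.U] .
lemma W1U: "W1 \<subseteq> U" using a.W1(2) .
lemma W2U: "W2 \<subseteq> U" using a.W2(2) .

lemma eqrA_in: "y \<in> U \<Longrightarrow> a \<in> W1 \<Longrightarrow> eqr U W1 W2 y (vadd y a)"
proof -
  assume y: "y \<in> U" and a: "a \<in> W1"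
  have "vadd y a \<in> U" using y a W1U subspace_add[OF a.U] by blast
  thus ?thesis using y a by (simp add: eqr_def)
qed

lemma eqrA_out: "y \<notin> U \<Longrightarrow> a \<in> W2 \<Longrightarrow> eqr U W1 W2 y (vadd y a)"
proof -
  assume y: "y \<notin> U" and a: "a \<in> W2"
  have "vadd a y \<notin> U" using a.U_in_out[of a y] y a W2U by blast
  hence "vadd y a \<notin> U" by (simp add: vadd_comm)
  thus ?thesis using y a by (simp add: eqr_def)
qed

lemma eqrB_in: "p \<in> U' \<Longrightarrow> eqr U' W1' W2' p q \<Longrightarrow> vadd p q \<in> W1'"
  by (simp add: eqr_def)

lemma eqrB_out: "p \<notin> U' \<Longrightarrow> eqr U' W1' W2' p q \<Longrightarrow> vadd p q \<in> W2'"
  by (simp add: eqr_def)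

lemma full_from_s:
  assumes j: "j < b" and x: "x \<in> vec n" and a: "a \<in> vec n" and al: "blk m j a \<noteq> zero"
    and W: "subspace n W"
    and s: "\<forall>u\<in>vec m. vadd (gam (upd m j u x)) (gam (vadd (upd m j u x) a)) \<in> W"
  shows "\<forall>w\<in>vec m. emb m j w \<in> W"
proof (rule ccontr)
  assume nf: "\<not> (\<forall>w\<in>vec m. emb m j w \<in> W)"
  have T: "subspace m (sl m j W)" by (rule sl_subspace[OF m0 j W])
  have Tn: "sl m j W \<noteq> vec m" using nf by (auto simp: sl_def)
  have "\<forall>u\<in>vec m. \<forall>u'\<in>vec m. vadd (fder (g j) (blk m j a) u) (fder (g j) (blk m j a) u') \<in> sl m j W"
  proof (intro ballI)
    fix u u' assume u: "u \<in> vec m" and u': "u' \<in> vec m"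
    have "vadd (vadd (gam (upd m j u x)) (gam (vadd (upd m j u x) a)))
               (vadd (gam (upd m j u' x)) (gam (vadd (upd m j u' x) a))) \<in> W"
      using s u u' subspace_add[OF W] by blast
    hence "emb m j (vadd (fder (g j) (blk m j a) u) (fder (g j) (blk m j a) u')) \<in> W"
      using der[OF j x a u u'] by simp
    moreover have "vadd (fder (g j) (blk m j a) u) (fder (g j) (blk m j a) u') \<in> vec m"
      using fder_vec[OF j] u u' by simp
    ultimately show "vadd (fder (g j) (blk m j a) u) (fder (g j) (blk m j a) u') \<in> sl m j W"
      by (simp add: sl_def)
  qed
  thus False using nh_contra[OF j blk_vec al T Tn] by blast
qed

lemma base1:
  assumes a: "a \<in> W1 \<union> W2" and j: "j < b" and inU: "\<forall>u\<in>vec m. emb m j u \<in> U"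
  shows "\<exists>x\<in>vec n. blk m j x = zero \<and> (\<forall>u\<in>vec m. eqr U W1 W2 (upd m j u x) (vadd (upd m j u x) a))"
proof (cases "a \<in> W1")
  case True
  have "\<forall>u\<in>vec m. eqr U W1 W2 (upd m j u zero) (vadd (upd m j u zero) a)"
    using inU eqrA_in True by blast
  thus ?thesis using m0 by (intro bexI[of _ zero]) auto
next
  case False
  hence a2: "a \<in> W2" using a by blast
  obtain q where q: "q \<in> vec n" "q \<notin> U" using a.U_ne by blast
  define p where "p = vadd q (emb m j (blk m j q))"
  have eU: "emb m j (blk m j q) \<in> U" using inU blk_vec by blast
  have pU: "p \<notin> U" unfolding p_def using a.U_in_out[OF eU q(2)] by (simp add: vadd_comm)
  have pb: "blk m j p = zero" unfolding p_def using m0 by (simp add: blk_vadd)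
  have pv: "p \<in> vec n" unfolding p_def using q m0 j by simp
  have "\<forall>u\<in>vec m. eqr U W1 W2 (upd m j u p) (vadd (upd m j u p) a)"
  proof
    fix u assume u: "u \<in> vec m"
    have "upd m j u p = vadd p (emb m j u)" using upd_as_vadd[OF m0 pb] .
    moreover have "vadd (emb m j u) p \<notin> U" using a.U_in_out[OF _ pU] inU u by blast
    ultimately have "upd m j u p \<notin> U" by (simp add: vadd_comm)
    thus "eqr U W1 W2 (upd m j u p) (vadd (upd m j u p) a)" using eqrA_out a2 by blast
  qed
  thus ?thesis using pv pb by blast
qed

lemma Kp_zero:
  assumes a: "a \<in> W1 \<union> W2" and j: "j \<in> J m b U'"
  shows "blk m j a = zero"
proof (rule ccontr)
  assume al: "blk m j a \<noteq> zero"
  have jb: "j < b" and ex': "\<exists>u\<in>vec m. emb m j u \<notin> U'" using J_iff[OF m0] j by auto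
  have "j \<notin> J m b U" using disj j by blast
  hence inU: "\<forall>u\<in>vec m. emb m j u \<in> U" using J_iff[OF m0] jb by blast
  have av: "a \<in> vec n" using a W1U W2U sU by blast
  obtain x where x: "x \<in> vec n" "blk m j x = zero"
    and ex: "\<forall>u\<in>vec m. eqr U W1 W2 (upd m j u x) (vadd (upd m j u x) a)"
    using base1[OF a jb inU] by blast
  have "\<forall>u\<in>vec m. vadd (gam (upd m j u x)) (gam (vadd (upd m j u x) a)) \<in> U'"
  proof
    fix u assume u: "u \<in> vec m"
    have uv: "upd m j u x \<in> vec n" using m0 jb x by simp
    have vv: "vadd (upd m j u x) a \<in> vec n" using uv av by simp
    have "eqr U W1 W2 (upd m j u x) (vadd (upd m j u x) a)" using ex u by blast
    hence "eqr U' W1' W2' (gam (upd m j u x)) (gam (vadd (upd m j u x) a))"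
      using corr uv vv by blast
    thus "vadd (gam (upd m j u x)) (gam (vadd (upd m j u x) a)) \<in> U'" by (rule eqrB_sub)
  qed
  hence "\<forall>w\<in>vec m. emb m j w \<in> U'" using full_from_s[OF jb x(1) av al c.U] by blast
  thus False using ex' by blast
qed

end



context mainL
begin

lemma K_zero:
  assumes a: "a \<in> W1 \<union> W2" and jJ: "j \<in> J m b U"
  shows "blk m j a = zero"
proof (rule ccontr)
  assume al: "blk m j a \<noteq> zero"
  have j: "j < b" and exH: "\<exists>u\<in>vec m. emb m j u \<notin> U" using J_iff[OF m0] jJ by auto
  have "j \<notin> J m b U'" using disj jJ by blast
  hence inU': "\<forall>w\<in>vec m. emb m j w \<in> U'" using J_iff[OF m0] j by blast
  have av: "a \<in> vec n" using a W1U W2U sU by blast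
  define f where "f = g j"
  define H where "H = sl m j U"
  define X1 where "X1 = sl m j W1"
  define X2 where "X2 = sl m j W2"
  define Y where "Y = sl m j W1'"
  have SH: "subspace m H" unfolding H_def by (rule sl_subspace[OF m0 j a.U])
  have SX1: "subspace m X1" unfolding X1_def by (rule sl_subspace[OF m0 j a.W1(1)])
  have SX2: "subspace m X2" unfolding X2_def by (rule sl_subspace[OF m0 j a.W2(1)])
  have SY: "subspace m Y" unfolding Y_def by (rule sl_subspace[OF m0 j c.W1(1)])
  have X1H: "X1 \<subseteq> H" using W1U by (auto simp: X1_def H_def sl_def)
  have X2H: "X2 \<subseteq> H" using W2U by (auto simp: X2_def H_def sl_def)
  have fH: "finite H" "finite Y" "finite X1" "finite X2"
    using SH SY SX1 SX2 subspace_finite by blast+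
  have embv: "emb m j u \<in> vec n" for u using m0 j by simp
  have fv: "u \<in> vec m \<Longrightarrow> f u \<in> vec m" for u using gv[OF j] by (simp add: f_def)
  have finj: "u \<in> vec m \<Longrightarrow> u' \<in> vec m \<Longrightarrow> f u = f u' \<Longrightarrow> u = u'" for u u'
    using ginj[OF j] by (simp add: f_def)
  have f0: "f zero = zero" using g0 j by (simp add: f_def)
  obtain h where h: "h \<in> vec m" "h \<notin> H" using exH by (auto simp: H_def sl_def)
  have i2H: "\<forall>x\<in>vec m - H. \<forall>y\<in>vec m - H. vadd x y \<in> H"
  proof (intro ballI)
    fix x y assume x: "x \<in> vec m - H" and y: "y \<in> vec m - H"
    have "emb m j x \<notin> U" "emb m j y \<notin> U" using x y by (auto simp: H_def sl_def)
    hence "vadd (emb m j x) (emb m j y) \<in> U" using a.U_i2 embv by blast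
    thus "vadd x y \<in> H" using x y by (simp add: H_def sl_def upd_vadd)
  qed
  have cH: "card (vec m - H) = card H" "2 * card H = 2 ^ m"
    using idx2_card[OF SH h i2H] by auto
  have "(2::nat) ^ 4 \<le> 2 ^ m" using m4 by (intro power_increasing) auto
  hence cH8: "8 \<le> card H" using cH(2) by simp
  have sH: "H \<subseteq> vec m" using subspace_vec[OF SH] .
  have sY: "Y \<subseteq> vec m" using subspace_vec[OF SY] .
  have sX2: "X2 \<subseteq> vec m" using subspace_vec[OF SX2] .
  have star: "((u \<in> H \<and> u' \<in> H \<and> vadd u u' \<in> X1) \<or> (u \<notin> H \<and> u' \<notin> H \<and> vadd u u' \<in> X2))
      \<longleftrightarrow> vadd (f u) (f u') \<in> Y" if u: "u \<in> vec m" and u': "u' \<in> vec m" for u u'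
  proof -
    have "eqr U W1 W2 (emb m j u) (emb m j u') = eqr U' W1' W2' (gam (emb m j u)) (gam (emb m j u'))"
      by (rule corr[rule_format, OF embv embv])
    also have "\<dots> = eqr U' W1' W2' (emb m j (f u)) (emb m j (f u'))"
      using gam_emb[OF j u] gam_emb[OF j u'] by (simp add: f_def)
    also have "\<dots> = (vadd (f u) (f u') \<in> Y)"
      using inU' fv[OF u] fv[OF u'] by (simp add: eqr_def upd_vadd Y_def sl_def)
    finally show ?thesis using u u'
      by (simp add: eqr_def upd_vadd H_def X1_def X2_def sl_def)
  qed
  have Ynt: "Y \<noteq> {zero}"
  proof
    assume Y0: "Y = {zero}"
    define D where "D = (if a \<in> W1 then H else vec m - H)"
    have cD: "card D = card H" using cH by (simp add: D_def)
    have sD: "D \<subseteq> vec m" using sH by (auto simp: D_def)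
    have sW: "\<forall>u\<in>D. vadd (gam (upd m j u zero)) (gam (vadd (upd m j u zero) a)) \<in> W1'"
    proof
      fix u assume uD: "u \<in> D"
      have u: "u \<in> vec m" using uD sD by blast
      have e: "eqr U W1 W2 (emb m j u) (vadd (emb m j u) a)"
      proof (cases "a \<in> W1")
        case True
        hence "emb m j u \<in> U" using uD by (simp add: D_def H_def sl_def)
        thus ?thesis using eqrA_in True by blast
      next
        case False
        hence "emb m j u \<notin> U" "a \<in> W2" using uD a by (auto simp: D_def H_def sl_def)
        thus ?thesis using eqrA_out by blast
      qed
      have vv: "vadd (emb m j u) a \<in> vec n" using embv av by simp
      have "eqr U' W1' W2' (gam (emb m j u)) (gam (vadd (emb m j u) a))"
        using corr[rule_format, OF embv vv] e by blast
      moreover have "gam (emb m j u) \<in> U'" using gam_emb[OF j u] inU' gv[OF j u] by simp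
      ultimately show "vadd (gam (upd m j u zero)) (gam (vadd (upd m j u zero) a)) \<in> W1'"
        using eqrB_in by blast
    qed
    have "D \<noteq> {}"
    proof
      assume "D = {}" hence "card D = 0" by simp
      thus False using cD cH8 by simp
    qed
    then obtain u0 where u0: "u0 \<in> D" by blast
    have "D \<subseteq> {x \<in> vec m. fder (g j) (blk m j a) x = fder (g j) (blk m j a) u0}"
    proof
      fix u assume uD: "u \<in> D"
      have u: "u \<in> vec m" and u0v: "u0 \<in> vec m" using uD u0 sD by auto
      have "vadd (vadd (gam (upd m j u zero)) (gam (vadd (upd m j u zero) a)))
                 (vadd (gam (upd m j u0 zero)) (gam (vadd (upd m j u0 zero) a))) \<in> W1'"
        using sW uD u0 subspace_add[OF c.W1(1)] by blast
      hence "emb m j (vadd (fder (g j) (blk m j a) u) (fder (g j) (blk m j a) u0)) \<in> W1'"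
        using der[OF j zero_vec av u u0v] by simp
      moreover have "vadd (fder (g j) (blk m j a) u) (fder (g j) (blk m j a) u0) \<in> vec m"
        using fder_vec[OF j] u u0v by simp
      ultimately have "vadd (fder (g j) (blk m j a) u) (fder (g j) (blk m j a) u0) \<in> Y"
        by (simp add: Y_def sl_def)
      hence "fder (g j) (blk m j a) u = fder (g j) (blk m j a) u0" using Y0 by (simp add: vadd_eq_zero_iff)
      thus "u \<in> {x \<in> vec m. fder (g j) (blk m j a) x = fder (g j) (blk m j a) u0}" using u by simp
    qed
    hence "card D \<le> card {x \<in> vec m. fder (g j) (blk m j a) x = fder (g j) (blk m j a) u0}"
      by (intro card_mono) auto
    also have "\<dots> \<le> 4"
    proof -
      have "u0 \<in> vec m" using u0 sD by blast
      hence "fder (g j) (blk m j a) u0 \<in> vec m" by (rule fder_vec[OF j _ blk_vec])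
      thus ?thesis by (rule du_le[OF j blk_vec al])
    qed
    finally show False using cD cH8 by simp
  qed
  obtain y0 where y0: "y0 \<in> Y" "y0 \<noteq> zero" using Ynt subspace_zero[OF SY] by blast
  have fX1: "f ` X1 = Y"
  proof
    show "f ` X1 \<subseteq> Y"
    proof
      fix w assume "w \<in> f ` X1"
      then obtain u where u: "u \<in> X1" "w = f u" by blast
      have uv: "u \<in> vec m" using u subspace_vec[OF SX1] by blast
      have "zero \<in> H" "u \<in> H" "vadd zero u \<in> X1" using u X1H subspace_zero[OF SH] by auto
      hence "vadd (f zero) (f u) \<in> Y" by (intro star[OF zero_vec uv, THEN iffD1] disjI1 conjI)
      thus "w \<in> Y" using u f0 by simp
    qed
    show "Y \<subseteq> f ` X1"
    proof
      fix w assume w: "w \<in> Y"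
      have wv: "w \<in> vec m" using w sY by blast
      obtain u where u: "u \<in> vec m" "g j u = w" using gsurj[OF j wv] by blast
      have "vadd (f zero) (f u) \<in> Y" using w u f0 by (simp add: f_def)
      hence "(zero \<in> H \<and> u \<in> H \<and> vadd zero u \<in> X1) \<or> (zero \<notin> H \<and> u \<notin> H \<and> vadd zero u \<in> X2)"
        by (rule star[OF zero_vec u(1), THEN iffD2])
      hence "u \<in> X1" using subspace_zero[OF SH] by simp
      thus "w \<in> f ` X1" using u by (auto simp: f_def)
    qed
  qed
  have cX1: "card X1 = card Y"
  proof -
    have "inj_on f X1" using finj subspace_vec[OF SX1] by (intro inj_onI) blast
    from card_image[OF this] show ?thesis using fX1 by simp
  qed
  have fX2: "f ` coset X2 h = coset Y (f h)"
  proof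
    show "f ` coset X2 h \<subseteq> coset Y (f h)"
    proof
      fix z assume "z \<in> f ` coset X2 h"
      then obtain w where w: "w \<in> X2" "z = f (vadd w h)" by (auto simp: coset_def)
      have wv: "w \<in> vec m" using w sX2 by blast
      have uv: "vadd w h \<in> vec m" using wv h by simp
      have "vadd w h \<notin> H"
      proof
        assume "vadd w h \<in> H"
        hence "vadd w (vadd w h) \<in> H" using w X2H subspace_add[OF SH] by blast
        thus False using h by simp
      qed
      moreover have "vadd h (vadd w h) \<in> X2" using w by simp
      ultimately have "vadd (f h) (f (vadd w h)) \<in> Y"
        using h(2) by (intro star[OF h(1) uv, THEN iffD1] disjI2 conjI)
      moreover have "z = vadd (vadd (f h) (f (vadd w h))) (f h)" using w by simp
      ultimately show "z \<in> coset Y (f h)" unfolding coset_def by blast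
    qed
    show "coset Y (f h) \<subseteq> f ` coset X2 h"
    proof
      fix z assume "z \<in> coset Y (f h)"
      then obtain t where t: "t \<in> Y" "z = vadd t (f h)" by (auto simp: coset_def)
      have "t \<in> vec m" using t sY by blast
      hence zv: "z \<in> vec m" using t fv[OF h(1)] by simp
      obtain u where u: "u \<in> vec m" "f u = z" using gsurj[OF j zv] by (auto simp: f_def)
      have "vadd (f h) (f u) \<in> Y" using t u by (simp add: vadd_comm)
      hence "(h \<in> H \<and> u \<in> H \<and> vadd h u \<in> X1) \<or> (h \<notin> H \<and> u \<notin> H \<and> vadd h u \<in> X2)"
        by (rule star[OF h(1) u(1), THEN iffD2])
      hence "vadd h u \<in> X2" using h(2) by simp
      moreover have "u = vadd (vadd h u) h" by simp
      ultimately have "u \<in> coset X2 h" unfolding coset_def by blast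
      thus "z \<in> f ` coset X2 h" using u by blast
    qed
  qed
  have cX2: "card X2 = card Y"
  proof -
    have "coset X2 h \<subseteq> vec m" using sX2 h by (auto simp: coset_def)
    hence "inj_on f (coset X2 h)" using finj by (intro inj_onI) blast
    hence "card (f ` coset X2 h) = card (coset X2 h)" by (rule card_image)
    thus ?thesis using fX2 card_coset[of X2 h] card_coset[of Y "f h"] by simp
  qed
  have cY2: "2 \<le> card Y"
  proof -
    have "{zero, y0} \<subseteq> Y" using y0 subspace_zero[OF SY] by simp
    hence "card {zero, y0} \<le> card Y" using fH by (intro card_mono) auto
    thus ?thesis using y0 by simp
  qed
  obtain a1 where a1: "a1 \<in> X1" "a1 \<noteq> zero"
  proof -
    have "\<not> X1 \<subseteq> {zero}"
    proof
      assume "X1 \<subseteq> {zero}"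
      hence "card X1 \<le> 1" using card_mono[of "{zero}" X1] by simp
      thus False using cX1 cY2 by simp
    qed
    thus ?thesis using that by blast
  qed
  have a1v: "a1 \<in> vec m" using a1 subspace_vec[OF SX1] by blast
  have bound: "card H \<le> 4 * (card Y - 1)"
  proof -
    have "H \<subseteq> (\<Union>w\<in>Y - {zero}. {x \<in> vec m. fder f a1 x = w})"
    proof
      fix u assume uH: "u \<in> H"
      have u: "u \<in> vec m" using uH sH by blast
      have ua: "vadd u a1 \<in> H" using uH a1 X1H subspace_add[OF SH] by blast
      have uav: "vadd u a1 \<in> vec m" using u a1v by simp
      have "vadd u (vadd u a1) \<in> X1" using a1 by simp
      hence "vadd (f u) (f (vadd u a1)) \<in> Y"
        using uH ua by (intro star[OF u uav, THEN iffD1] disjI1 conjI)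
      hence inY: "fder f a1 u \<in> Y" by (simp add: fder_def vadd_comm)
      have "fder f a1 u \<noteq> zero"
      proof
        assume "fder f a1 u = zero"
        hence "f (vadd u a1) = f u" by (simp add: fder_def vadd_eq_zero_iff)
        hence "vadd u a1 = u" using finj uav u by blast
        hence "vadd u (vadd u a1) = vadd u u" by simp
        hence "a1 = zero" by simp
        thus False using a1 by simp
      qed
      thus "u \<in> (\<Union>w\<in>Y - {zero}. {x \<in> vec m. fder f a1 x = w})" using inY u by blast
    qed
    moreover have "finite (\<Union>w\<in>Y - {zero}. {x \<in> vec m. fder f a1 x = w})"
      by (rule finite_subset[of _ "vec m"]) auto
    ultimately have "card H \<le> card (\<Union>w\<in>Y - {zero}. {x \<in> vec m. fder f a1 x = w})"
      using card_mono by blast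
    also have "\<dots> \<le> (\<Sum>w\<in>Y - {zero}. card {x \<in> vec m. fder f a1 x = w})"
      using fH by (intro card_UN_le) auto
    also have "\<dots> \<le> (\<Sum>w\<in>Y - {zero}. 4)"
    proof (rule sum_mono)
      fix w assume "w \<in> Y - {zero}"
      hence "w \<in> vec m" using sY by blast
      thus "card {x \<in> vec m. fder f a1 x = w} \<le> 4"
        unfolding f_def using du_le[OF j a1v a1(2)] by blast
    qed
    also have "\<dots> = 4 * (card Y - 1)"
      using fH subspace_zero[OF SY] by (simp add: card_Diff_singleton)
    finally show ?thesis .
  qed
  obtain be where be: "be \<in> X1" "be \<in> X2" "be \<noteq> zero"
  proof -
    have "\<not> X1 \<inter> X2 \<subseteq> {zero}"
    proof
      assume I0: "X1 \<inter> X2 \<subseteq> {zero}"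
      have inj: "inj_on (\<lambda>(p, q). vadd p q) (X1 \<times> X2)"
      proof (rule inj_onI, clarify)
        fix p q p' q' assume p: "p \<in> X1" "q \<in> X2" "p' \<in> X1" "q' \<in> X2" and e: "vadd p q = vadd p' q'"
        have e2: "vadd p p' = vadd q q'" using vadd_swap[OF e] .
        have "vadd p p' \<in> X1" "vadd q q' \<in> X2" using p subspace_add SX1 SX2 by blast+
        hence "vadd p p' \<in> X1 \<inter> X2" using e2 by simp
        hence "vadd p p' = zero" using I0 by blast
        hence "p = p'" "q = q'" using e2 by (simp_all add: vadd_eq_zero_iff)
        thus "p = p' \<and> q = q'" by simp
      qed
      have "(\<lambda>(p, q). vadd p q) ` (X1 \<times> X2) \<subseteq> H"
      proof (rule image_subsetI)
        fix pq assume "pq \<in> X1 \<times> X2"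
        then obtain p q where pq: "pq = (p, q)" "p \<in> X1" "q \<in> X2" by blast
        have "vadd p q \<in> H" using pq X1H X2H by (intro subspace_add[OF SH]) auto
        thus "(\<lambda>(p, q). vadd p q) pq \<in> H" using pq by simp
      qed
      hence "card ((\<lambda>(p, q). vadd p q) ` (X1 \<times> X2)) \<le> card H" using fH by (intro card_mono) auto
      hence "card X1 * card X2 \<le> card H" using card_image[OF inj] by (simp add: card_cartesian_product)
      hence sq: "card Y * card Y \<le> 4 * (card Y - 1)" using cX1 cX2 bound by simp
      show False
      proof (cases "card Y \<le> 2")
        case True
        hence "4 * (card Y - 1) \<le> 4" by simp
        thus False using bound cH8 by simp
      next
        case False
        define z where "z = card Y - 3"
        have "card Y = z + 3" using False by (simp add: z_def)
        thus False using sq by (simp add: algebra_simps)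
      qed
    qed
    thus ?thesis using that by blast
  qed
  have bev: "be \<in> vec m" using be sX2 by blast
  have beH: "be \<in> H" using be(1) X1H by blast
  have allY: "\<forall>u\<in>vec m. fder f be u \<in> Y"
  proof
    fix u assume u: "u \<in> vec m"
    have ubv: "vadd u be \<in> vec m" using u bev by simp
    have s: "vadd u (vadd u be) = be" by simp
    have disj: "(u \<in> H \<and> vadd u be \<in> H \<and> vadd u (vadd u be) \<in> X1) \<or>
          (u \<notin> H \<and> vadd u be \<notin> H \<and> vadd u (vadd u be) \<in> X2)"
    proof (cases "u \<in> H")
      case True
      have "vadd u be \<in> H" by (rule subspace_add[OF SH True beH])
      moreover have "vadd u (vadd u be) \<in> X1" unfolding s by (rule be(1))
      ultimately show ?thesis using True by (intro disjI1 conjI)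
    next
      case False
      have "vadd u be \<notin> H"
      proof
        assume h1: "vadd u be \<in> H"
        have "vadd (vadd u be) be \<in> H" by (rule subspace_add[OF SH h1 beH])
        hence "u \<in> H" by (simp only: vadd_cancel1)
        thus False using False by (rule notE[rotated])
      qed
      moreover have "vadd u (vadd u be) \<in> X2" unfolding s by (rule be(2))
      ultimately show ?thesis using False by (intro disjI2 conjI)
    qed
    have "vadd (f u) (f (vadd u be)) \<in> Y" by (rule star[OF u ubv, THEN iffD1, OF disj])
    thus "fder f be u \<in> Y" by (simp add: fder_def vadd_comm)
  qed
  have Yn: "Y \<noteq> vec m"
  proof
    assume "Y = vec m"
    hence "card Y = 2 ^ m" by (simp add: card_vec)
    moreover have "card X1 \<le> card H" using X1H fH by (intro card_mono) auto
    ultimately show False using cX1 cH cH8 by simp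
  qed
  have "\<forall>u\<in>vec m. \<forall>u'\<in>vec m. vadd (fder (g j) be u) (fder (g j) be u') \<in> Y"
    using allY subspace_add[OF SY] by (simp add: f_def)
  thus False using nh_contra[OF j bev be(3) SY Yn] by blast
qed

end


context lapart
begin

lemma cls_in: "p \<in> U \<Longrightarrow> cls n U W1 W2 p = coset W1 p"
proof
  assume p: "p \<in> U"
  show "cls n U W1 W2 p \<subseteq> coset W1 p"
  proof
    fix y assume "y \<in> cls n U W1 W2 p"
    hence "vadd p y \<in> W1" using p by (auto simp: cls_def eqr_def)
    have "y = vadd (vadd p y) p" by simp
    thus "y \<in> coset W1 p" unfolding coset_def using \<open>vadd p y \<in> W1\<close> by (rule image_eqI)
  qed
  show "coset W1 p \<subseteq> cls n U W1 W2 p"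
  proof
    fix y assume "y \<in> coset W1 p"
    then obtain w where w: "w \<in> W1" "y = vadd w p" by (auto simp: coset_def)
    have "y \<in> U" using w p W1 subspace_add[OF U] by blast
    moreover have "vadd p y = w" using w by simp
    moreover have "y \<in> vec n" using \<open>y \<in> U\<close> subspace_vec[OF U] by blast
    ultimately show "y \<in> cls n U W1 W2 p" using p w by (simp add: cls_def eqr_def)
  qed
qed

lemma cls_out: "p \<in> vec n \<Longrightarrow> p \<notin> U \<Longrightarrow> cls n U W1 W2 p = coset W2 p"
proof
  assume pv: "p \<in> vec n" and p: "p \<notin> U"
  show "cls n U W1 W2 p \<subseteq> coset W2 p"
  proof
    fix y assume "y \<in> cls n U W1 W2 p"
    hence "vadd p y \<in> W2" using p by (auto simp: cls_def eqr_def)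
    have "y = vadd (vadd p y) p" by simp
    thus "y \<in> coset W2 p" unfolding coset_def using \<open>vadd p y \<in> W2\<close> by (rule image_eqI)
  qed
  show "coset W2 p \<subseteq> cls n U W1 W2 p"
  proof
    fix y assume "y \<in> coset W2 p"
    then obtain w where w: "w \<in> W2" "y = vadd w p" by (auto simp: coset_def)
    have wU: "w \<in> U" using w W2 by blast
    have "y \<notin> U" unfolding w(2) using U_in_out[OF wU p] .
    moreover have "vadd p y = w" using w by simp
    moreover have "y \<in> vec n" using w(2) wU pv subspace_vec[OF U] by auto
    ultimately show "y \<in> cls n U W1 W2 p" using p w by (simp add: cls_def eqr_def)
  qed
qed

lemma LA_lin: "W1 = W2 \<Longrightarrow> LA n U W1 W2 = lin_part n W1"
proof -
  assume e: "W1 = W2"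
  have "cls n U W1 W2 x = coset W1 x" if "x \<in> vec n" for x
    using cls_in cls_out that e by (cases "x \<in> U") auto
  hence "{cls n U W1 W2 x | x. x \<in> vec n} = {coset W1 x | x. x \<in> vec n}" by blast
  thus ?thesis using LA_cls by (simp add: lin_part_def)
qed

lemma LA_triv: "W1 = {zero} \<Longrightarrow> W2 = {zero} \<Longrightarrow> LA n U W1 W2 = {{v} | v. v \<in> vec n}"
proof -
  assume e1: "W1 = {zero}" and e2: "W2 = {zero}"
  have "LA n U W1 W2 = lin_part n {zero}" using LA_lin e1 e2 by simp
  moreover have "coset {zero} v = {v}" for v by (simp add: coset_def)
  ultimately show ?thesis by (simp add: lin_part_def)
qed

end

context mainL
begin

lemma R_full:
  assumes j: "j < b" "j \<notin> J m b U" "j \<notin> J m b U'" and a: "a \<in> vec n" "blk m j a \<noteq> zero"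
    and x: "x \<in> vec n" "blk m j x = zero"
    and ex: "(x \<in> U \<and> a \<in> W1) \<or> (x \<notin> U \<and> a \<in> W2)"
  shows "gam x \<in> U' \<Longrightarrow> \<forall>w\<in>vec m. emb m j w \<in> W1'"
    and "gam x \<notin> U' \<Longrightarrow> \<forall>w\<in>vec m. emb m j w \<in> W2'"
proof -
  have inU: "\<forall>u\<in>vec m. emb m j u \<in> U" using J_iff[OF m0] j by blast
  have inU': "\<forall>u\<in>vec m. emb m j u \<in> U'" using J_iff[OF m0] j by blast
  have gx: "blk m j (gam x) = zero" using blk_gam[OF j(1)] x g0 j by simp
  have key: "eqr U' W1' W2' (gam (upd m j u x)) (gam (vadd (upd m j u x) a)) \<and>
      (gam (upd m j u x) \<in> U' \<longleftrightarrow> gam x \<in> U')" if u: "u \<in> vec m" for u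
  proof
    have y: "upd m j u x = vadd x (emb m j u)" using upd_as_vadd[OF m0 x(2)] .
    have eU: "emb m j u \<in> U" using inU u by blast
    have yv: "upd m j u x \<in> vec n" using m0 j x by simp
    have yav: "vadd (upd m j u x) a \<in> vec n" using yv a by simp
    have "eqr U W1 W2 (upd m j u x) (vadd (upd m j u x) a)"
    proof (cases "x \<in> U")
      case True
      hence "upd m j u x \<in> U" unfolding y using eU subspace_add[OF a.U] by blast
      thus ?thesis using eqrA_in ex True by blast
    next
      case False
      hence "upd m j u x \<notin> U" unfolding y using a.U_in_out[OF eU False] by (simp add: vadd_comm)
      thus ?thesis using eqrA_out ex False by blast
    qed
    thus "eqr U' W1' W2' (gam (upd m j u x)) (gam (vadd (upd m j u x) a))"
      using corr[rule_format, OF yv yav] by blast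
    have gy: "gam (upd m j u x) = vadd (gam x) (emb m j (g j u))"
      using gam_upd[OF j(1) u x(1)] upd_as_vadd[OF m0 gx] by simp
    have eU': "emb m j (g j u) \<in> U'" using inU' gv[OF j(1) u] by blast
    show "gam (upd m j u x) \<in> U' \<longleftrightarrow> gam x \<in> U'"
    proof (cases "gam x \<in> U'")
      case True thus ?thesis unfolding gy using eU' subspace_add[OF c.U] by blast
    next
      case False thus ?thesis unfolding gy using c.U_in_out[OF eU' False] by (simp add: vadd_comm)
    qed
  qed
  show "\<forall>w\<in>vec m. emb m j w \<in> W1'" if "gam x \<in> U'"
  proof (rule full_from_s[OF j(1) x(1) a c.W1(1)])
    show "\<forall>u\<in>vec m. vadd (gam (upd m j u x)) (gam (vadd (upd m j u x) a)) \<in> W1'"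
      using key that eqrB_in by blast
  qed
  show "\<forall>w\<in>vec m. emb m j w \<in> W2'" if "gam x \<notin> U'"
  proof (rule full_from_s[OF j(1) x(1) a c.W2(1)])
    show "\<forall>u\<in>vec m. vadd (gam (upd m j u x)) (gam (vadd (upd m j u x) a)) \<in> W2'"
      using key that eqrB_out by blast
  qed
qed

lemma exK: "subspace n S \<Longrightarrow> S \<noteq> vec n \<Longrightarrow> \<exists>k u. k < b \<and> u \<in> vec m \<and> emb m k u \<notin> S"
proof (rule ccontr)
  assume S: "subspace n S" and ne: "S \<noteq> vec n" and c: "\<not> (\<exists>k u. k < b \<and> u \<in> vec m \<and> emb m k u \<notin> S)"
  have "vec n \<subseteq> S"
  proof
    fix q assume q: "q \<in> vec n"
    show "q \<in> S" using dec[OF m0 S q] c blk_vec by blast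
  qed
  thus False using ne subspace_vec[OF S] by blast
qed

definition wallset :: "nat set \<Rightarrow> (nat \<Rightarrow> bool) set" where
  "wallset I = {v \<in> vec n. \<forall>k. v k \<longrightarrow> k div m \<in> I}"

definition supp :: "(nat \<Rightarrow> bool) set \<Rightarrow> nat set" where
  "supp S = {j. j < b \<and> (\<exists>a\<in>S. blk m j a \<noteq> zero)}"

lemma sub_wallset: "S \<subseteq> vec n \<Longrightarrow> S \<subseteq> wallset (supp S)"
proof
  fix v assume S: "S \<subseteq> vec n" and v: "v \<in> S"
  have vv: "v \<in> vec n" using S v by blast
  have "k div m \<in> supp S" if vk: "v k" for k
  proof -
    have "k < n" using vv vk by (simp add: vec_def) (meson not_le)
    hence kb: "k div m < b" using div_lt_b[OF m0] by blast
    have "blk m (k div m) v (k mod m) = v k" using blk_at[OF m0] .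
    hence "blk m (k div m) v \<noteq> zero" using vk by (auto simp: zero_def)
    thus ?thesis using kb v by (auto simp: supp_def)
  qed
  thus "v \<in> wallset (supp S)" using vv by (simp add: wallset_def)
qed

lemma wallset_sub:
  assumes S: "subspace n S" and I: "I \<subseteq> {..<b}" and h: "\<forall>j\<in>I. \<forall>w\<in>vec m. emb m j w \<in> S"
  shows "wallset I \<subseteq> S"
proof
  fix v assume v: "v \<in> wallset I"
  have vv: "v \<in> vec n" using v by (simp add: wallset_def)
  show "v \<in> S"
  proof (rule dec[OF m0 S vv], intro allI impI)
    fix i assume i: "i < b"
    show "emb m i (blk m i v) \<in> S"
    proof (cases "i \<in> I")
      case True thus ?thesis using h blk_vec by blast
    next
      case False
      have "blk m i v = zero"
      proof
        fix t show "blk m i v t = zero t"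
        proof (cases "t < m")
          case True
          have "(i * m + t) div m = i" using True by simp
          hence "\<not> v (i * m + t)" using v False by (auto simp: wallset_def)
          thus ?thesis using True by (simp add: blk_def zero_def)
        qed (simp add: blk_def zero_def)
      qed
      thus ?thesis using subspace_zero[OF S] by simp
    qed
  qed
qed

lemma main_result: "wall m b W1 \<and> W1 = W1' \<and> W1 = W2 \<and> W1 = W2'"
proof -
  obtain k uk where k: "k < b" "uk \<in> vec m" "emb m k uk \<notin> U"
    using exK[OF a.U] a.U_ne by blast
  obtain k' wk where k': "k' < b" "wk \<in> vec m" "emb m k' wk \<notin> U'"
    using exK[OF c.U] c.U_ne by blast
  have kJ: "k \<in> J m b U" using J_iff[OF m0] k by blast
  have kJ': "k' \<in> J m b U'" using J_iff[OF m0] k' by blast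
  have kn: "k \<notin> J m b U'" and kn': "k' \<notin> J m b U" using disj kJ kJ' by blast+
  have kk: "k \<noteq> k'" using kJ kn' by blast
  obtain v' where v': "v' \<in> vec m" "g k' v' = wk" using gsurj[OF k'(1,2)] by blast
  have inUk': "emb m k' u \<in> U" if "u \<in> vec m" for u using J_iff[OF m0] kn' k' that by blast
  have inU'k: "emb m k u \<in> U'" if "u \<in> vec m" for u using J_iff[OF m0] kn k that by blast
  define P2 where "P2 = emb m k' v'"
  define P3 where "P3 = emb m k uk"
  define P4 where "P4 = upd m k' v' P3"
  have P2: "P2 \<in> vec n" "P2 \<in> U" "gam P2 \<notin> U'"
  proof -
    show "P2 \<in> vec n" unfolding P2_def using m0 k'(1) by (rule emb_vec)
    show "P2 \<in> U" unfolding P2_def using inUk'[OF v'(1)] .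
    have "gam P2 = emb m k' wk" unfolding P2_def using gam_emb[OF k'(1) v'(1)] v'(2) by simp
    thus "gam P2 \<notin> U'" using k'(3) by simp
  qed
  have P3: "P3 \<in> vec n" "P3 \<notin> U" "gam P3 \<in> U'"
  proof -
    show "P3 \<in> vec n" unfolding P3_def using m0 k(1) by (rule emb_vec)
    show "P3 \<notin> U" unfolding P3_def using k(3) .
    have "gam P3 = emb m k (g k uk)" unfolding P3_def using gam_emb[OF k(1,2)] .
    thus "gam P3 \<in> U'" using inU'k[OF gv[OF k(1,2)]] by simp
  qed
  have P3b: "blk m k' P3 = zero" using m0 kk by (simp add: P3_def)
  have P4e: "P4 = vadd P3 (emb m k' v')" unfolding P4_def using upd_as_vadd[OF m0 P3b] .
  have P4v: "P4 \<in> vec n" using m0 k' P3 by (simp add: P4_def)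
  have P4U: "P4 \<notin> U" unfolding P4e using a.U_in_out[OF inUk'[OF v'(1)] P3(2)] by (simp add: vadd_comm)
  have gP3b: "blk m k' (gam P3) = zero" using blk_gam[OF k'(1)] P3b g0 k' by simp
  have gP4: "gam P4 = vadd (gam P3) (emb m k' wk)"
    unfolding P4_def using gam_upd[OF k'(1) v'(1) P3(1)] upd_as_vadd[OF m0 gP3b] v' by simp
  have P4U': "gam P4 \<notin> U'"
    unfolding gP4 using c.U_in_out[OF P3(3) k'(3)] .
  have blkP: "blk m j zero = zero \<and> blk m j P2 = zero \<and> blk m j P3 = zero"
    if "j \<noteq> k" "j \<noteq> k'" for j using that m0 by (simp add: P2_def P3_def)
  have suppR: "j \<notin> J m b U \<and> j \<notin> J m b U' \<and> j \<noteq> k \<and> j \<noteq> k'" if "j < b" "a \<in> W1 \<union> W2" "blk m j a \<noteq> zero" for j a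
  proof -
    have 1: "j \<notin> J m b U" using K_zero[OF that(2)] that(3) by blast
    have 2: "j \<notin> J m b U'" using Kp_zero[OF that(2)] that(3) by blast
    show ?thesis using 1 2 kJ kJ' by blast
  qed
  have sW1v: "W1 \<subseteq> vec n" using W1U sU by blast
  have sW2v: "W2 \<subseteq> vec n" using W2U sU by blast
  have V1: "\<forall>j\<in>supp W1. \<forall>w\<in>vec m. emb m j w \<in> W1' \<and> emb m j w \<in> W2'"
  proof (intro ballI)
    fix j w assume j: "j \<in> supp W1" and w: "w \<in> vec m"
    then obtain a where jb: "j < b" and a: "a \<in> W1" "blk m j a \<noteq> zero" by (auto simp: supp_def)
    have av: "a \<in> vec n" using a sW1v by blast
    have R: "j \<notin> J m b U" "j \<notin> J m b U'" "j \<noteq> k" "j \<noteq> k'" using suppR[OF jb _ a(2)] a by auto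
    have bz: "blk m j zero = zero" "blk m j P2 = zero" using blkP[OF R(3,4)] by simp_all
    have zU: "zero \<in> U" using subspace_zero[OF a.U] .
    have zU': "gam zero \<in> U'" using subspace_zero[OF c.U] gam_zero by simp
    have "\<forall>w\<in>vec m. emb m j w \<in> W1'"
      using R_full(1)[OF jb R(1,2) av a(2) zero_vec bz(1) _ zU'] zU a(1) by blast
    moreover have "\<forall>w\<in>vec m. emb m j w \<in> W2'"
      using R_full(2)[OF jb R(1,2) av a(2) P2(1) bz(2) _ P2(3)] P2(2) a(1) by blast
    ultimately show "emb m j w \<in> W1' \<and> emb m j w \<in> W2'" using w by blast
  qed
  have V2: "\<forall>j\<in>supp W2. \<forall>w\<in>vec m. emb m j w \<in> W1'"
  proof (intro ballI)
    fix j w assume j: "j \<in> supp W2" and w: "w \<in> vec m"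
    then obtain a where jb: "j < b" and a: "a \<in> W2" "blk m j a \<noteq> zero" by (auto simp: supp_def)
    have av: "a \<in> vec n" using a sW2v by blast
    have R: "j \<notin> J m b U" "j \<notin> J m b U'" "j \<noteq> k" "j \<noteq> k'" using suppR[OF jb _ a(2)] a by auto
    have bz: "blk m j P3 = zero" using blkP[OF R(3,4)] by simp
    have "\<forall>w\<in>vec m. emb m j w \<in> W1'"
      using R_full(1)[OF jb R(1,2) av a(2) P3(1) bz _ P3(3)] P3(2) a(1) by blast
    thus "emb m j w \<in> W1'" using w by blast
  qed
  have sb: "supp S \<subseteq> {..<b}" for S by (auto simp: supp_def)
  have w1: "wallset (supp W1) \<subseteq> W1'" using wallset_sub[OF c.W1(1) sb] V1 by blast
  have w1': "wallset (supp W1) \<subseteq> W2'" using wallset_sub[OF c.W2(1) sb] V1 by blast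
  have w2: "wallset (supp W2) \<subseteq> W1'" using wallset_sub[OF c.W1(1) sb] V2 by blast
  have memW1: "x \<in> W1 \<longleftrightarrow> gam x \<in> W1'" if x: "x \<in> vec n" for x
  proof -
    have "x \<in> W1 \<longleftrightarrow> eqr U W1 W2 zero x"
      using subspace_zero[OF a.U] W1U by (auto simp: eqr_def)
    also have "\<dots> \<longleftrightarrow> eqr U' W1' W2' (gam zero) (gam x)" using corr[rule_format, OF zero_vec x] by blast
    also have "\<dots> \<longleftrightarrow> eqr U' W1' W2' zero (gam x)" using gam_zero by simp
    also have "\<dots> \<longleftrightarrow> gam x \<in> W1'" using subspace_zero[OF c.U] c.W1 by (auto simp: eqr_def)
    finally show ?thesis .
  qed
  have gW1: "gam ` W1 = W1'"
  proof
    show "gam ` W1 \<subseteq> W1'" using memW1 sW1v by blast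
    show "W1' \<subseteq> gam ` W1"
    proof
      fix y assume y: "y \<in> W1'"
      have "y \<in> vec n" using y c.W1 sU' by blast
      then obtain x where x: "x \<in> vec n" "gam x = y" using gam_surj_pt by blast
      hence "x \<in> W1" using memW1 y by blast
      thus "y \<in> gam ` W1" using x by blast
    qed
  qed
  have cW1: "card W1 = card W1'"
    using gW1 card_image[OF inj_on_subset[OF gam_inj_on sW1v]] by simp
  have gW2: "gam ` cls n U W1 W2 P4 = cls n U' W1' W2' (gam P4)"
  proof
    show "gam ` cls n U W1 W2 P4 \<subseteq> cls n U' W1' W2' (gam P4)"
    proof
      fix y assume "y \<in> gam ` cls n U W1 W2 P4"
      then obtain x where x: "x \<in> vec n" "eqr U W1 W2 P4 x" "y = gam x" by (auto simp: cls_def)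
      have "eqr U' W1' W2' (gam P4) (gam x)" using corr[rule_format, OF P4v x(1)] x(2) by blast
      thus "y \<in> cls n U' W1' W2' (gam P4)" using x(3) by (simp add: cls_def)
    qed
    show "cls n U' W1' W2' (gam P4) \<subseteq> gam ` cls n U W1 W2 P4"
    proof
      fix y assume y: "y \<in> cls n U' W1' W2' (gam P4)"
      have yv: "y \<in> vec n" using y by (simp add: cls_def)
      then obtain x where x: "x \<in> vec n" "gam x = y" using gam_surj_pt by blast
      have "eqr U' W1' W2' (gam P4) (gam x)" using y x(2) by (simp add: cls_def)
      hence "eqr U W1 W2 P4 x" using corr[rule_format, OF P4v x(1)] by blast
      hence "x \<in> cls n U W1 W2 P4" using x(1) by (simp add: cls_def)
      thus "y \<in> gam ` cls n U W1 W2 P4" using x by blast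
    qed
  qed
  have cW2: "card W2 = card W2'"
  proof -
    have sc: "cls n U W1 W2 P4 \<subseteq> vec n" by (auto simp: cls_def)
    have "card (gam ` cls n U W1 W2 P4) = card (cls n U W1 W2 P4)"
      using card_image[OF inj_on_subset[OF gam_inj_on sc]] .
    hence "card (cls n U' W1' W2' (gam P4)) = card (cls n U W1 W2 P4)" using gW2 by simp
    thus ?thesis using a.cls_out[OF P4v P4U] c.cls_out[OF par_vec P4U'] card_coset[of W2 P4]
      card_coset[of W2' "gam P4"] by simp
  qed
  have fin: "finite W1'" "finite W2'" using c.W1 c.W2 subspace_finite by blast+
  have W1s: "W1 \<subseteq> wallset (supp W1)" using sub_wallset[OF sW1v] .
  have W2s: "W2 \<subseteq> wallset (supp W2)" using sub_wallset[OF sW2v] .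
  have e1: "W1 = W1'" using card_subset_eq[OF fin(1) subset_trans[OF W1s w1] cW1] .
  have ew: "wallset (supp W1) = W1"
  proof (rule subset_antisym)
    show "wallset (supp W1) \<subseteq> W1" using w1 e1 by simp
  qed (rule W1s)
  have W2W1: "W2 \<subseteq> W1" using subset_trans[OF W2s w2] e1 by simp
  have W1W2': "W1 \<subseteq> W2'" using w1' ew by simp
  have e2: "W2 = W2'" using card_subset_eq[OF fin(2) subset_trans[OF W2W1 W1W2'] cW2] .
  have e3: "W1 = W2"
  proof (rule subset_antisym)
    show "W1 \<subseteq> W2" using W1W2' e2 by simp
  qed (rule W2W1)
  have f1: "W1' = W1" and f2: "W2' = W1" using e1 e2 e3 by simp_all
  have nz: "W1 \<noteq> {zero}" using nontriv unfolding f1 f2 by simp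
  have wl: "wall m b W1"
    unfolding wall_def
  proof (intro exI conjI)
    show "W1 = {v \<in> vec (m * b). \<forall>k. v k \<longrightarrow> k div m \<in> supp W1}"
      using ew by (simp add: wallset_def)
    show "supp W1 \<noteq> {}"
    proof
      assume "supp W1 = {}"
      hence "W1 \<subseteq> {zero}" using ew by (auto simp: wallset_def zero_def fun_eq_iff)
      thus False using nz subspace_zero[OF a.W1(1)] by blast
    qed
    show "supp W1 \<subset> {..<b}"
    proof -
      have "supp W1 \<noteq> {..<b}"
      proof
        assume e: "supp W1 = {..<b}"
        have "vec n \<subseteq> W1"
        proof
          fix v assume v: "v \<in> vec n"
          have "\<forall>k. v k \<longrightarrow> k div m \<in> supp W1"
          proof (intro allI impI)
            fix k assume "v k"
            hence "k < n" using v by (simp add: vec_def) (meson not_le)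
            thus "k div m \<in> supp W1" using e div_lt_b[OF m0] by blast
          qed
          thus "v \<in> W1" using ew v by (auto simp: wallset_def)
        qed
        hence "vec n \<subseteq> U" using W1U by blast
        thus False using a.U_ne by blast
      qed
      thus ?thesis using sb by blast
    qed
  qed
  show ?thesis using wl e1 e2 e3 by simp
qed

end


lemma par_inj:
  assumes m: "0 < m" and gi: "\<forall>i<b. inj_on (g i) (vec m)" and gv: "\<forall>i<b. \<forall>w\<in>vec m. g i w \<in> vec m"
  shows "inj_on (par m b g) (vec (m * b))"
proof (rule inj_onI)
  fix x y assume x: "x \<in> vec (m * b)" and y: "y \<in> vec (m * b)" and e: "par m b g x = par m b g y"
  show "x = y"
  proof (rule vec_eq_blk[OF m x y], intro allI impI)
    fix i assume i: "i < b"
    have "blk m i (par m b g x) = g i (blk m i x)" by (rule blk_par[OF m i]) (use gv i in simp)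
    moreover have "blk m i (par m b g y) = g i (blk m i y)" by (rule blk_par[OF m i]) (use gv i in simp)
    ultimately have "g i (blk m i x) = g i (blk m i y)" using e by simp
    thus "blk m i x = blk m i y" using gi i inj_onD blk_vec by metis
  qed
qed

theorem lemma3p17:
  fixes m b :: nat
    and g :: "nat \<Rightarrow> (nat \<Rightarrow> bool) \<Rightarrow> (nat \<Rightarrow> bool)"
    and U W1 W2 U' W1' W2' :: "(nat \<Rightarrow> bool) set"
  assumes b: "b > 1" and m: "m \<ge> 4"
    and perm: "\<forall>i<b. bij_betw (g i) (vec m) (vec m)"
    and zero: "par m b g zero = zero"
    and du: "\<forall>i<b. diff_unif m (g i) = 4"
    and nh: "\<forall>i<b. nhat m (g i) = 0"
    and U: "subspace (m * b) U" "card U = 2 ^ (m * b - 1)"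
    and W: "subspace (m * b) W1" "W1 \<subseteq> U" "subspace (m * b) W2" "W2 \<subseteq> U"
    and U': "subspace (m * b) U'" "card U' = 2 ^ (m * b - 1)"
    and W': "subspace (m * b) W1'" "W1' \<subseteq> U'" "subspace (m * b) W2'" "W2' \<subseteq> U'"
    and maps: "maps_onto (par m b g) (LA (m * b) U W1 W2) (LA (m * b) U' W1' W2')"
    and nontriv: "\<not> trivial_part (m * b) (LA (m * b) U' W1' W2')"
    and disj: "J m b U \<inter> J m b U' = {}"
  shows "wall m b W1 \<and> wall m b W2 \<and> wall m b W1' \<and> wall m b W2' \<and>
         W1 = W1' \<and> W1 = W2 \<and> W1 = W2' \<and>
         LA (m * b) U W1 W2 = lin_part (m * b) W1 \<and>
         LA (m * b) U' W1' W2' = lin_part (m * b) W1'"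
proof -
  have m0: "0 < m" using m by simp
  have nb: "1 \<le> m * b" using m b by simp
  have c2: "card (vec (m * b)) = 2 * 2 ^ (m * b - 1)"
  proof -
    have "(2::nat) ^ (m * b) = 2 ^ Suc (m * b - 1)" using nb by simp
    thus ?thesis by (simp add: card_vec)
  qed
  have A: "lapart (m * b) U W1 W2"
    by (rule lapart.intro) (use U W c2 in simp_all)
  have B: "lapart (m * b) U' W1' W2'"
    by (rule lapart.intro) (use U' W' c2 in simp_all)
  have gv: "\<forall>i<b. \<forall>w\<in>vec m. g i w \<in> vec m" using perm bij_betw_apply by metis
  have gi: "\<forall>i<b. inj_on (g i) (vec m)" using perm bij_betw_imp_inj_on by metis
  have g0: "\<forall>i<b. g i zero = zero"
  proof (intro allI impI)
    fix i assume i: "i < b"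
    have "blk m i (par m b g zero) = g i (blk m i zero)"
      by (rule blk_par[OF m0 i]) (use gv i in simp)
    thus "g i zero = zero" using zero by simp
  qed
  have inj: "inj_on (par m b g) (vec (m * b))" by (rule par_inj[OF m0 gi gv])
  have corr: "\<forall>x\<in>vec (m * b). \<forall>y\<in>vec (m * b).
      eqr U W1 W2 x y = eqr U' W1' W2' (par m b g x) (par m b g y)"
    using corr[OF A B inj _ maps] by simp
  have nt: "\<not> (W1' = {zero} \<and> W2' = {zero})"
  proof
    assume "W1' = {zero} \<and> W2' = {zero}"
    hence "LA (m * b) U' W1' W2' = {{v} | v. v \<in> vec (m * b)}"
      using lapart.LA_triv[OF B] by simp
    thus False using nontriv by (simp add: trivial_part_def)
  qed
  have MI: "mainL m b g U W1 W2 U' W1' W2'"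
    by (rule mainL.intro) (use m b perm g0 du nh A B corr nt disj in simp_all)
  have R: "wall m b W1 \<and> W1 = W1' \<and> W1 = W2 \<and> W1 = W2'" by (rule mainL.main_result[OF MI])
  have r1: "wall m b W1" and r2: "W1 = W1'" and r3: "W1 = W2" and r4: "W1 = W2'" using R by blast+
  have e12': "W1' = W2'" using trans[OF sym[OF r2] r4] .
  have L1: "LA (m * b) U W1 W2 = lin_part (m * b) W1" by (rule lapart.LA_lin[OF A r3])
  have L2: "LA (m * b) U' W1' W2' = lin_part (m * b) W1'" by (rule lapart.LA_lin[OF B e12'])
  show ?thesis using r1 L1 L2 unfolding r3[symmetric] r2[symmetric] r4[symmetric] by simp
qed


end
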